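(* Let $R$ be a commutative domain of finite character with field of fractions $Q$, let $\Lambda$ be an $R$-algebra finitely generated as an $R$-module, and let $M,N,K$ be finitely generated right $\Lambda$-modules which are torsion-free as $R$-modules. Assume that $M_\mathfrak m$ is a direct summand of $N_\mathfrak m$ for every maximal ideal $\mathfrak m$ of $R$, and that $M\otimes_R Q$ is a direct summand of $K\otimes_R Q$ (as $\Lambda\otimes_R Q$-modules). Then $M$ is a direct summand of $N\oplus K$.
   Context: A commutative domain has finite character if every non-zero element lies in only finitely many maximal ideals. A module is torsion-free over $R$ if $M\to M\otimes_R Q$ is injective. *)

theory Defs
  imports Main
begin

definition r_ideal :: "'r::comm_ring_1 set \<Rightarrow> bool" where
  "r_ideal I \<longleftrightarrow> 0 \<in> I \<and> (\<forall>x\<in>I. \<forall>y\<in>I. x + y \<in> I) \<and> (\<forall>r. \<forall>x\<in>I. r * x \<in> I)"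

definition max_ideal :: "'r::comm_ring_1 set \<Rightarrow> bool" where
  "max_ideal I \<longleftrightarrow> r_ideal I \<and> I \<noteq> UNIV \<and>
     (\<forall>J. r_ideal J \<and> I \<subseteq> J \<longrightarrow> J = I \<or> J = UNIV)"

definition finite_character :: "'r::idom itself \<Rightarrow> bool" where
  "finite_character _ \<longleftrightarrow> (\<forall>r::'r. r \<noteq> 0 \<longrightarrow> finite {m. max_ideal m \<and> r \<in> m})"

definition is_algebra_map :: "('r::comm_ring_1 \<Rightarrow> 'a::ring_1) \<Rightarrow> bool" where
  "is_algebra_map \<phi> \<longleftrightarrow> \<phi> 1 = 1 \<and> (\<forall>r s. \<phi> (r + s) = \<phi> r + \<phi> s) \<and>
     (\<forall>r s. \<phi> (r * s) = \<phi> r * \<phi> s) \<and> (\<forall>r a. \<phi> r * a = a * \<phi> r)"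

definition fg_over_base :: "('r::comm_ring_1 \<Rightarrow> 'a::ring_1) \<Rightarrow> bool" where
  "fg_over_base \<phi> \<longleftrightarrow> (\<exists>G. finite G \<and> (\<forall>a. \<exists>c. a = (\<Sum>g\<in>G. \<phi> (c g) * g)))"

definition right_module :: "('m::ab_group_add \<Rightarrow> 'a::ring_1 \<Rightarrow> 'm) \<Rightarrow> bool" where
  "right_module act \<longleftrightarrow> (\<forall>x. act x 1 = x) \<and> (\<forall>x a b. act x (a * b) = act (act x a) b) \<and>
     (\<forall>x y a. act (x + y) a = act x a + act y a) \<and> (\<forall>x a b. act x (a + b) = act x a + act x b)"

definition fg_right_module :: "('m::ab_group_add \<Rightarrow> 'a::ring_1 \<Rightarrow> 'm) \<Rightarrow> bool" where
  "fg_right_module act \<longleftrightarrow> (\<exists>G. finite G \<and> (\<forall>x. \<exists>c. x = (\<Sum>g\<in>G. act g (c g))))"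

text \<open>\<open>sm\<close> is the R-scalar multiplication (x, r) \<mapsto> x r. S^-1 M is the set of classes of pairs (x, s).\<close>

definition loc_rel :: "('m::ab_group_add \<Rightarrow> 'r::comm_ring_1 \<Rightarrow> 'm) \<Rightarrow> 'r set \<Rightarrow> (('m \<times> 'r) \<times> ('m \<times> 'r)) set" where
  "loc_rel sm S = {((x, s), (y, t)). s \<in> S \<and> t \<in> S \<and> (\<exists>u\<in>S. sm (sm x t - sm y s) u = 0)}"

definition loc :: "('m::ab_group_add \<Rightarrow> 'r::comm_ring_1 \<Rightarrow> 'm) \<Rightarrow> 'r set \<Rightarrow> ('m \<times> 'r) set set" where
  "loc sm S = (UNIV \<times> S) // loc_rel sm S"

definition loc_class :: "('m::ab_group_add \<Rightarrow> 'r::comm_ring_1 \<Rightarrow> 'm) \<Rightarrow> 'r set \<Rightarrow> 'm \<Rightarrow> 'r \<Rightarrow> ('m \<times> 'r) set" where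
  "loc_class sm S x s = loc_rel sm S `` {(x, s)}"

definition loc_add :: "('m::ab_group_add \<Rightarrow> 'r::comm_ring_1 \<Rightarrow> 'm) \<Rightarrow> 'r set \<Rightarrow>
    ('m \<times> 'r) set \<Rightarrow> ('m \<times> 'r) set \<Rightarrow> ('m \<times> 'r) set" where
  "loc_add sm S X Y = (case (SOME p. p \<in> X, SOME q. q \<in> Y) of
      ((x, s), (y, t)) \<Rightarrow> loc_class sm S (sm x t + sm y s) (s * t))"

definition loc_act :: "('m::ab_group_add \<Rightarrow> 'r::comm_ring_1 \<Rightarrow> 'm) \<Rightarrow> 'r set \<Rightarrow> ('m \<Rightarrow> 'a \<Rightarrow> 'm) \<Rightarrow>
    ('m \<times> 'r) set \<Rightarrow> ('a \<times> 'r) set \<Rightarrow> ('m \<times> 'r) set" where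
  "loc_act sm S act X A = (case (SOME p. p \<in> X, SOME q. q \<in> A) of
      ((x, s), (a, t)) \<Rightarrow> loc_class sm S (act x a) (s * t))"

text \<open>Complement of a prime (maximal) ideal, and the non-zero elements (giving M tensor_R Q).\<close>
abbreviation nonzeros :: "'r::idom set" where "nonzeros \<equiv> UNIV - {0}"

text \<open>Torsion-free: the canonical map M \<rightarrow> M tensor_R Q = (R - 0)^-1 M, x \<mapsto> x/1, is injective.\<close>
definition torsion_free :: "('m::ab_group_add \<Rightarrow> 'r::idom \<Rightarrow> 'm) \<Rightarrow> bool" where
  "torsion_free sm \<longleftrightarrow> inj (\<lambda>x. loc_class sm nonzeros x 1)"

definition is_direct_summand ::
  "'x set \<Rightarrow> ('x \<Rightarrow> 'x \<Rightarrow> 'x) \<Rightarrow> ('x \<Rightarrow> 's \<Rightarrow> 'x) \<Rightarrow>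
   'y set \<Rightarrow> ('y \<Rightarrow> 'y \<Rightarrow> 'y) \<Rightarrow> ('y \<Rightarrow> 's \<Rightarrow> 'y) \<Rightarrow> 's set \<Rightarrow> bool" where
  "is_direct_summand CM addM actM CN addN actN Sc \<longleftrightarrow>
    (\<exists>f C. (\<forall>x\<in>CM. f x \<in> CN) \<and> inj_on f CM \<and>
       (\<forall>x\<in>CM. \<forall>y\<in>CM. f (addM x y) = addN (f x) (f y)) \<and>
       (\<forall>x\<in>CM. \<forall>a\<in>Sc. f (actM x a) = actN (f x) a) \<and>
       C \<subseteq> CN \<and> C \<noteq> {} \<and>
       (\<forall>x\<in>C. \<forall>y\<in>C. addN x y \<in> C) \<and> (\<forall>x\<in>C. \<forall>a\<in>Sc. actN x a \<in> C) \<and>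
       (\<forall>n\<in>CN. \<exists>!p. fst p \<in> f ` CM \<and> snd p \<in> C \<and> n = addN (fst p) (snd p)))"

definition loc_direct_summand ::
  "('r::comm_ring_1 \<Rightarrow> 'a::ring_1) \<Rightarrow> 'r set \<Rightarrow> ('m::ab_group_add \<Rightarrow> 'a \<Rightarrow> 'm) \<Rightarrow> ('n::ab_group_add \<Rightarrow> 'a \<Rightarrow> 'n) \<Rightarrow> bool" where
  "loc_direct_summand \<phi> S actM actN \<longleftrightarrow>
    (let smM = (\<lambda>x r. actM x (\<phi> r)); smN = (\<lambda>x r. actN x (\<phi> r)); smL = (\<lambda>a r. a * \<phi> r) in
     is_direct_summand (loc smM S) (loc_add smM S) (loc_act smM S actM)
                       (loc smN S) (loc_add smN S) (loc_act smN S actN) (loc smL S))"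

end

theory Submission
  imports Defs "Jordan_Normal_Form.Determinant"
begin

definition prime_id :: "'r::comm_ring_1 set \<Rightarrow> bool" where
  "prime_id m \<longleftrightarrow> r_ideal m \<and> 1 \<notin> m \<and> (\<forall>a b. a * b \<in> m \<longrightarrow> a \<in> m \<or> b \<in> m)"

lemma ideal_0: "r_ideal I \<Longrightarrow> 0 \<in> I" by (simp add: r_ideal_def)
lemma ideal_add: "r_ideal I \<Longrightarrow> x \<in> I \<Longrightarrow> y \<in> I \<Longrightarrow> x + y \<in> I" by (simp add: r_ideal_def)
lemma ideal_multl: "r_ideal I \<Longrightarrow> x \<in> I \<Longrightarrow> r * x \<in> I" by (simp add: r_ideal_def)
lemma ideal_multr: "r_ideal I \<Longrightarrow> x \<in> I \<Longrightarrow> x * r \<in> I" by (metis ideal_multl mult.commute)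
lemma ideal_neg: "r_ideal I \<Longrightarrow> x \<in> I \<Longrightarrow> - x \<in> I"
  using ideal_multl[of I x "-1"] by simp
lemma ideal_diff: "r_ideal I \<Longrightarrow> x \<in> I \<Longrightarrow> y \<in> I \<Longrightarrow> x - y \<in> I"
  using ideal_add[of I x "-y"] ideal_neg[of I y] by simp
lemma ideal_sum: "r_ideal I \<Longrightarrow> (\<And>i. i \<in> A \<Longrightarrow> f i \<in> I) \<Longrightarrow> sum f A \<in> I"
  by (induction A rule: infinite_finite_induct) (auto simp: ideal_0 ideal_add)

lemma ideal_prod_cong:
  assumes I: "r_ideal I" and d: "\<And>i. i \<in> A \<Longrightarrow> f i - g i \<in> I"
  shows "prod f A - prod g A \<in> I"
  using d
proof (induction A rule: infinite_finite_induct)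
  case (infinite A) then show ?case by (simp add: ideal_0[OF I])
next
  case empty then show ?case by (simp add: ideal_0[OF I])
next
  case (insert x F)
  have "prod f (insert x F) - prod g (insert x F) = (f x - g x) * prod f F + g x * (prod f F - prod g F)"
    using insert by (simp add: algebra_simps)
  moreover have "(f x - g x) * prod f F \<in> I" using insert ideal_multr[OF I] by auto
  moreover have "g x * (prod f F - prod g F) \<in> I" using insert ideal_multl[OF I] by auto
  ultimately show ?case using ideal_add[OF I] by metis
qed

lemma prime_prod_notin:
  assumes "prime_id m" "\<And>i. i \<in> A \<Longrightarrow> f i \<notin> m"
  shows "prod f A \<notin> m"
  using assms(2)
proof (induction A rule: infinite_finite_induct)
  case (insert x F) then show ?case using assms(1) unfolding prime_id_def by auto
qed (use assms(1) in \<open>auto simp: prime_id_def\<close>)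

lemma prime_pow_notin: "prime_id m \<Longrightarrow> s \<notin> m \<Longrightarrow> s ^ n \<notin> m"
  using prime_prod_notin[of m "{..<n}" "\<lambda>_. s"] by simp

lemma det_cong:
  fixes A B :: "'r::comm_ring_1 mat"
  assumes I: "r_ideal I" and A: "A \<in> carrier_mat n n" and B: "B \<in> carrier_mat n n"
    and d: "\<And>i j. i < n \<Longrightarrow> j < n \<Longrightarrow> A $$ (i,j) - B $$ (i,j) \<in> I"
  shows "det A - det B \<in> I"
proof -
  have "det A - det B = (\<Sum>p | p permutes {0..<n}. of_int (sign p) *
      ((\<Prod>i = 0..<n. A $$ (i, p i)) - (\<Prod>i = 0..<n. B $$ (i, p i))))"
    unfolding det_def'[OF A] det_def'[OF B] by (simp add: sum_subtractf algebra_simps)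
  also have "\<dots> \<in> I"
  proof (rule ideal_sum[OF I])
    fix p assume "p \<in> {p. p permutes {0..<n}}"
    then have "\<And>i. i \<in> {0..<n} \<Longrightarrow> p i < n"
      by (simp add: permutes_in_image)
    then have "(\<Prod>i = 0..<n. A $$ (i, p i)) - (\<Prod>i = 0..<n. B $$ (i, p i)) \<in> I"
      by (intro ideal_prod_cong[OF I]) (auto intro: d)
    then show "of_int (sign p) * ((\<Prod>i = 0..<n. A $$ (i, p i)) - (\<Prod>i = 0..<n. B $$ (i, p i))) \<in> I"
      by (rule ideal_multl[OF I])
  qed
  finally show ?thesis .
qed

locale rmod =
  fixes sm :: "'m::ab_group_add \<Rightarrow> 'r::comm_ring_1 \<Rightarrow> 'm"
  assumes sm_one[simp]: "sm x 1 = x"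
    and sm_assoc[simp]: "sm (sm x a) b = sm x (a * b)"
    and sm_addl: "sm (x + y) a = sm x a + sm y a"
    and sm_addr: "sm x (a + b) = sm x a + sm x b"
begin

lemma sm_zero_r[simp]: "sm x 0 = 0"
  using sm_addr[of x 0 0] by simp
lemma sm_zero_l[simp]: "sm 0 a = 0"
  using sm_addl[of 0 0 a] by simp
lemma sm_neg_l: "sm (-x) a = - sm x a"
  using sm_addl[of x "-x" a] by (metis minus_unique right_minus sm_zero_l)
lemma sm_neg_r: "sm x (-a) = - sm x a"
  using sm_addr[of x a "-a"] by (metis minus_unique right_minus sm_zero_r)
lemma sm_diff_l: "sm (x - y) a = sm x a - sm y a"
  using sm_addl[of x "-y" a] sm_neg_l by simp
lemma sm_diff_r: "sm x (a - b) = sm x a - sm x b"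
  using sm_addr[of x a "-b"] sm_neg_r by simp
lemma sm_sum_l: "sm (\<Sum>i\<in>I. f i) a = (\<Sum>i\<in>I. sm (f i) a)"
  by (induction I rule: infinite_finite_induct) (auto simp: sm_addl)
lemma sm_sum_r: "sm x (\<Sum>i\<in>I. f i) = (\<Sum>i\<in>I. sm x (f i))"
  by (induction I rule: infinite_finite_induct) (auto simp: sm_addr)

definition rlin :: "('m \<Rightarrow> 'm) \<Rightarrow> bool" where
  "rlin h \<longleftrightarrow> (\<forall>x x'. h (x + x') = h x + h x') \<and> (\<forall>x r. h (sm x r) = sm (h x) r)"

lemma rlin_add: "rlin h \<Longrightarrow> h (x + x') = h x + h x'" by (simp add: rlin_def)
lemma rlin_sm: "rlin h \<Longrightarrow> h (sm x r) = sm (h x) r" by (simp add: rlin_def)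
lemma rlin_0: "rlin h \<Longrightarrow> h 0 = 0"
  using rlin_add[of h 0 0] by simp
lemma rlin_neg: "rlin h \<Longrightarrow> h (- x) = - h x"
  using rlin_add[of h x "-x"] rlin_0[of h] by (metis minus_unique right_minus)
lemma rlin_diff: "rlin h \<Longrightarrow> h (x - x') = h x - h x'"
  using rlin_add[of h x "-x'"] rlin_neg[of h x'] by simp
lemma rlin_sum: "rlin h \<Longrightarrow> h (\<Sum>i\<in>I. f i) = (\<Sum>i\<in>I. h (f i))"
  by (induction I rule: infinite_finite_induct) (auto simp: rlin_add rlin_0)

lemma rlin_funpow: "rlin y \<Longrightarrow> rlin (y ^^ k)"
  by (induction k) (auto simp: rlin_def)

lemma comm_funpow: "(\<And>x. h (y x) = y (h x)) \<Longrightarrow> h ((y ^^ k) x) = (y ^^ k) (h x)"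
  by (induction k) auto

definition ev :: "('m \<Rightarrow> 'm) \<Rightarrow> 'r poly \<Rightarrow> 'm \<Rightarrow> 'm" where
  "ev y p x = (\<Sum>k\<le>degree p. sm ((y ^^ k) x) (coeff p k))"

lemma ev_bound: "degree p \<le> N \<Longrightarrow> ev y p x = (\<Sum>k\<le>N. sm ((y ^^ k) x) (coeff p k))"
  unfolding ev_def
  by (rule sum.mono_neutral_left) (auto simp: coeff_eq_0)

lemma ev_add: "ev y (p + q) x = ev y p x + ev y q x"
proof -
  let ?N = "max (degree p) (degree q)"
  have "ev y (p + q) x = (\<Sum>k\<le>?N. sm ((y ^^ k) x) (coeff (p + q) k))"
    by (rule ev_bound) (simp add: degree_add_le)
  also have "\<dots> = (\<Sum>k\<le>?N. sm ((y ^^ k) x) (coeff p k)) + (\<Sum>k\<le>?N. sm ((y ^^ k) x) (coeff q k))"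
    by (simp add: sm_addr sum.distrib)
  also have "\<dots> = ev y p x + ev y q x"
    using ev_bound[of p ?N y x] ev_bound[of q ?N y x] by simp
  finally show ?thesis .
qed

lemma ev_0[simp]: "ev y 0 x = 0"
  by (simp add: ev_def)

lemma ev_sum: "ev y (\<Sum>i\<in>I. f i) x = (\<Sum>i\<in>I. ev y (f i) x)"
  by (induction I rule: infinite_finite_induct) (auto simp: ev_add)

lemma ev_smult: "ev y (smult b p) x = sm (ev y p x) b"
proof -
  have "ev y (smult b p) x = (\<Sum>k\<le>degree p. sm ((y ^^ k) x) (coeff (smult b p) k))"
    by (rule ev_bound) (simp add: degree_smult_le)
  also have "\<dots> = sm (ev y p x) b"
    by (simp add: ev_def sm_sum_l mult.commute)
  finally show ?thesis .
qed

lemma ev_neg: "ev y (- p) x = - ev y p x"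
  using ev_add[of y p "-p" x] by (metis minus_unique right_minus ev_0)

lemma ev_diff: "ev y (p - q) x = ev y p x - ev y q x"
  using ev_add[of y p "-q" x] ev_neg[of y q x] by simp

lemma ev_const: "ev y [:b:] x = sm x b"
  by (simp add: ev_def)

lemma ev_pCons0:
  assumes y: "rlin y"
  shows "ev y (pCons 0 p) x = y (ev y p x)"
proof -
  have "ev y (pCons 0 p) x = (\<Sum>k\<le>Suc (degree p). sm ((y ^^ k) x) (coeff (pCons 0 p) k))"
    by (rule ev_bound) (simp add: degree_pCons_le)
  also have "\<dots> = (\<Sum>k\<le>degree p. sm ((y ^^ Suc k) x) (coeff p k))"
    by (subst sum.atMost_Suc_shift) simp
  also have "\<dots> = y (ev y p x)"
    by (simp add: ev_def rlin_sum[OF y] rlin_sm[OF y])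
  finally show ?thesis .
qed

lemma ev_pCons:
  assumes y: "rlin y"
  shows "ev y (pCons a p) x = sm x a + y (ev y p x)"
proof -
  have "pCons a p = [:a:] + pCons 0 p" by simp
  then show ?thesis using ev_add ev_const ev_pCons0[OF y] by metis
qed

lemma ev_commute:
  assumes h: "rlin h" and hy: "\<And>x. h (y x) = y (h x)"
  shows "h (ev y p x) = ev y p (h x)"
proof -
  have c: "\<And>k x. h ((y ^^ k) x) = (y ^^ k) (h x)" by (rule comm_funpow) (rule hy)
  show ?thesis unfolding ev_def by (simp add: rlin_sum[OF h] rlin_sm[OF h] c)
qed

lemma rlin_ev: assumes y: "rlin y" shows "rlin (ev y p)"
proof -
  have f: "\<And>k. rlin (y ^^ k)" by (rule rlin_funpow[OF y])
  show ?thesis unfolding rlin_def ev_def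
    by (auto simp: rlin_add[OF f] rlin_sm[OF f] sm_addl sum.distrib sm_sum_l ac_simps)
qed

end

context rmod begin

lemma det_trick:
  fixes xs :: "'m list" and B :: "nat \<Rightarrow> nat \<Rightarrow> 'r" and T :: "'r set set"
  assumes y: "rlin y"
    and gen: "\<And>x. \<exists>c. x = (\<Sum>i<length xs. sm (xs!i) (c i))"
    and rep: "\<And>j. j < length xs \<Longrightarrow> y (xs!j) = (\<Sum>i<length xs. sm (xs!i) (B i j))"
    and T: "\<And>m. m \<in> T \<Longrightarrow> prime_id m"
    and cong: "\<And>m. m \<in> T \<Longrightarrow> \<exists>s. s \<notin> m \<and> (\<forall>i<length xs. \<forall>j<length xs. B i j - (if i = j then s else 0) \<in> m)"
  shows "\<exists>a q. (\<forall>m\<in>T. a \<notin> m) \<and> (\<forall>x. y (ev y q x) = sm x a)"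
proof -
  define n where "n = length xs"
  define Ct :: "'r poly mat" where "Ct = mat n n (\<lambda>(j,i). (if j = i then [:0,1:] else 0) - [:B i j:])"
  define Bt :: "'r mat" where "Bt = mat n n (\<lambda>(j,i). B i j)"
  have Ct: "Ct \<in> carrier_mat n n" by (simp add: Ct_def)
  have Bt: "Bt \<in> carrier_mat n n" by (simp add: Bt_def)
  have evX: "ev y [:0,1:] x = y x" for x
    using ev_pCons0[OF y, of "[:1:]" x] by (simp add: ev_const)
  have Cx: "ev y (Ct $$ (j,i)) x = (if j = i then y x else 0) - sm x (B i j)" if "j<n" "i<n" for j i x
    using that by (simp add: Ct_def ev_diff ev_const evX)
  have mulC: "ev y (p * Ct $$ (j,i)) x = ev y p (ev y (Ct $$ (j,i)) x)" if "j<n" "i<n" for p j i x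
  proof -
    have "p * Ct $$ (j,i) = (if j = i then pCons 0 p else 0) - smult (B i j) p"
      using that by (simp add: Ct_def algebra_simps)
    then have "ev y (p * Ct $$ (j,i)) x = (if j = i then y (ev y p x) else 0) - sm (ev y p x) (B i j)"
      by (simp add: ev_diff ev_pCons0[OF y] ev_smult)
    also have "\<dots> = ev y p ((if j = i then y x else 0) - sm x (B i j))"
      using rlin_ev[OF y, of p] ev_commute[OF y, of y p x]
      by (simp add: rlin_diff rlin_sm rlin_0)
    finally show ?thesis using Cx[OF that] by simp
  qed
  have rowsum: "(\<Sum>i<n. ev y (Ct $$ (j,i)) (xs!i)) = 0" if "j<n" for j
  proof -
    have "(\<Sum>i<n. ev y (Ct $$ (j,i)) (xs!i)) = (\<Sum>i<n. (if j = i then y (xs!i) else 0) - sm (xs!i) (B i j))"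
      by (rule sum.cong) (auto simp: Cx that)
    also have "\<dots> = y (xs!j) - (\<Sum>i<n. sm (xs!i) (B i j))"
      using that by (simp add: sum_subtractf)
    also have "\<dots> = 0" using rep[of j] that by (simp add: n_def)
    finally show ?thesis .
  qed
  have adj: "adj_mat Ct * Ct = det Ct \<cdot>\<^sub>m 1\<^sub>m n" using adj_mat[OF Ct] by simp
  have adjc: "adj_mat Ct \<in> carrier_mat n n" using adj_mat[OF Ct] by simp
  have kill: "ev y (det Ct) (xs!k) = 0" if k: "k<n" for k
  proof -
    have "ev y (det Ct) (xs!k) = (\<Sum>i<n. if k = i then ev y (det Ct) (xs!i) else 0)"
      using k by simp
    also have "\<dots> = (\<Sum>i<n. ev y ((det Ct \<cdot>\<^sub>m 1\<^sub>m n) $$ (k,i)) (xs!i))"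
      by (rule sum.cong) (auto simp: k)
    also have "\<dots> = (\<Sum>i<n. ev y ((adj_mat Ct * Ct) $$ (k,i)) (xs!i))"
      by (simp add: adj)
    also have "\<dots> = (\<Sum>i<n. \<Sum>j<n. ev y (adj_mat Ct $$ (k,j) * Ct $$ (j,i)) (xs!i))"
      using adjc Ct k
      by (intro sum.cong refl) (simp add: index_mult_mat scalar_prod_def ev_sum atLeast0LessThan)
    also have "\<dots> = (\<Sum>i<n. \<Sum>j<n. ev y (adj_mat Ct $$ (k,j)) (ev y (Ct $$ (j,i)) (xs!i)))"
      by (intro sum.cong refl) (simp add: mulC)
    also have "\<dots> = (\<Sum>j<n. ev y (adj_mat Ct $$ (k,j)) (\<Sum>i<n. ev y (Ct $$ (j,i)) (xs!i)))"
      by (subst sum.swap) (simp add: rlin_sum[OF rlin_ev[OF y]])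
    also have "\<dots> = 0"
      by (simp add: rowsum rlin_0[OF rlin_ev[OF y]])
    finally show ?thesis .
  qed
  have kill_all: "ev y (det Ct) x = 0" for x
  proof -
    obtain c where c: "x = (\<Sum>i<n. sm (xs!i) (c i))" using gen[of x] n_def by auto
    show ?thesis unfolding c
      by (simp add: rlin_sum[OF rlin_ev[OF y]] rlin_sm[OF rlin_ev[OF y]] kill)
  qed
  obtain a0 q where dc: "det Ct = pCons a0 q" by (rule pCons_cases)
  interpret h: comm_ring_hom "\<lambda>p::'r poly. poly p 0" by unfold_locales auto
  have mm: "map_mat (\<lambda>p. poly p 0) Ct = (-1) \<cdot>\<^sub>m Bt"
    by (rule eq_matI) (auto simp: Ct_def Bt_def)
  have "a0 = poly (det Ct) 0" by (simp add: dc)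
  also have "\<dots> = det (map_mat (\<lambda>p. poly p 0) Ct)" by simp
  also have "\<dots> = (-1)^n * det Bt" using Bt by (simp add: mm)
  finally have a0: "a0 = (-1)^n * det Bt" .
  have ev_dc: "sm x a0 + y (ev y q x) = 0" for x
    using kill_all[of x] by (simp add: dc ev_pCons[OF y])
  have notin: "- a0 \<notin> m" if m: "m \<in> T" for m
  proof
    assume am: "- a0 \<in> m"
    have pm: "prime_id m" using T[OF m] .
    then have I: "r_ideal m" by (simp add: prime_id_def)
    obtain s where s: "s \<notin> m" and sc: "\<forall>i<n. \<forall>j<n. B i j - (if i = j then s else 0) \<in> m"
      using cong[OF m] n_def by auto
    have "det Bt - det (s \<cdot>\<^sub>m 1\<^sub>m n) \<in> m"
    proof (rule det_cong[OF I Bt])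
      fix i j assume ij: "i < n" "j < n"
      then have "B j i - (if j = i then s else 0) \<in> m" using sc by blast
      then show "Bt $$ (i, j) - (s \<cdot>\<^sub>m 1\<^sub>m n) $$ (i, j) \<in> m"
        using ij by (auto simp: Bt_def)
    qed simp
    then have d1: "det Bt - s ^ n \<in> m" by simp
    have "a0 \<in> m" using ideal_neg[OF I am] by simp
    then have "(-1)^n * a0 \<in> m" by (rule ideal_multl[OF I])
    moreover have "(-1)^n * a0 = det Bt" by (simp add: a0 flip: power_mult_distrib)
    ultimately have "det Bt \<in> m" by simp
    then have "s ^ n \<in> m" using ideal_diff[OF I _ d1] by force
    then show False using prime_pow_notin[OF pm s] by simp
  qed
  show ?thesis
  proof (intro exI conjI ballI allI)
    show "- a0 \<notin> m" if "m \<in> T" for m using notin that .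
    show "y (ev y q x) = sm x (- a0)" for x using ev_dc[of x] by (simp add: sm_neg_r add_eq_0_iff2)
  qed
qed

end

lemma ideal_one: "r_ideal I \<Longrightarrow> 1 \<in> I \<Longrightarrow> I = UNIV"
  using ideal_multl[of I 1] by auto

lemma max_prime:
  fixes m :: "'r::comm_ring_1 set"
  assumes mm: "max_ideal m" shows "prime_id m"
proof -
  have I: "r_ideal m" and ne: "m \<noteq> UNIV" and mx: "\<And>J. r_ideal J \<Longrightarrow> m \<subseteq> J \<Longrightarrow> J = m \<or> J = UNIV"
    using mm by (auto simp: max_ideal_def)
  have one: "1 \<notin> m" using ideal_one[OF I] ne by auto
  have "a \<in> m \<or> b \<in> m" if ab: "a * b \<in> m" for a b
  proof (rule ccontr)
    assume "\<not> (a \<in> m \<or> b \<in> m)"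
    then have a: "a \<notin> m" and b: "b \<notin> m" by auto
    define J where "J = {x + r * a | x r. x \<in> m}"
    have JI: "r_ideal J" unfolding r_ideal_def J_def
    proof (intro conjI ballI allI)
      have "(0::'r) = 0 + 0 * a" by simp
      then show "0 \<in> {x + r * a |x r. x \<in> m}" using ideal_0[OF I] by blast
      fix u v assume "u \<in> {x + r * a |x r. x \<in> m}" "v \<in> {x + r * a |x r. x \<in> m}"
      then obtain x r x' r' where "u = x + r * a" "v = x' + r' * a" "x \<in> m" "x' \<in> m" by auto
      then have "u + v = (x + x') + (r + r') * a" "x + x' \<in> m" using ideal_add[OF I] by (auto simp: algebra_simps)
      then show "u + v \<in> {x + r * a |x r. x \<in> m}" by blast
    next
      fix s u assume "u \<in> {x + r * a |x r. x \<in> m}"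
      then obtain x r where "u = x + r * a" "x \<in> m" by auto
      then have "s * u = (s * x) + (s * r) * a" "s * x \<in> m" using ideal_multl[OF I, of x s] by (auto simp: algebra_simps)
      then show "s * u \<in> {x + r * a |x r. x \<in> m}" by blast
    qed
    have "m \<subseteq> J"
    proof
      fix x assume "x \<in> m"
      moreover have "x = x + 0 * a" by simp
      ultimately show "x \<in> J" unfolding J_def by blast
    qed
    moreover have "a \<in> J"
    proof -
      have "a = 0 + 1 * a" by simp
      then show ?thesis unfolding J_def using ideal_0[OF I] by blast
    qed
    ultimately have "J = UNIV" using mx[OF JI] a by auto
    then obtain x r where xr: "1 = x + r * a" "x \<in> m" unfolding J_def by blast
    then have "b = x * b + r * (a * b)" by (metis mult_1 distrib_right mult.assoc mult.commute)
    moreover have "x * b \<in> m" "r * (a * b) \<in> m" using xr ab ideal_multr[OF I] ideal_multl[OF I] by auto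
    ultimately have "b \<in> m" using ideal_add[OF I] by metis
    then show False using b by simp
  qed
  then show ?thesis using I one by (auto simp: prime_id_def)
qed

lemma max_exists:
  fixes I :: "'r::comm_ring_1 set"
  assumes I: "r_ideal I" and one: "1 \<notin> I"
  shows "\<exists>m. max_ideal m \<and> I \<subseteq> m"
proof -
  define A where "A = {J. r_ideal J \<and> I \<subseteq> J \<and> 1 \<notin> J}"
  have "\<exists>M\<in>A. \<forall>X\<in>A. M \<subseteq> X \<longrightarrow> X = M"
  proof (rule Zorn_Lemma2, intro ballI)
    fix C assume C: "C \<in> chains A"
    then have CA: "C \<subseteq> A" and ch: "\<And>x y. x \<in> C \<Longrightarrow> y \<in> C \<Longrightarrow> x \<subseteq> y \<or> y \<subseteq> x"
      unfolding chains_def chain_subset_def by auto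
    show "\<exists>U\<in>A. \<forall>X\<in>C. X \<subseteq> U"
    proof (cases "C = {}")
      case True then show ?thesis using I one unfolding A_def by auto
    next
      case False
      then obtain J0 where J0: "J0 \<in> C" by auto
      have "r_ideal (\<Union>C)" unfolding r_ideal_def
      proof (intro conjI ballI allI)
        show "0 \<in> \<Union>C" using J0 CA ideal_0 unfolding A_def by blast
        fix x y assume "x \<in> \<Union>C" "y \<in> \<Union>C"
        then obtain J1 J2 where "x \<in> J1" "y \<in> J2" "J1 \<in> C" "J2 \<in> C" by auto
        then show "x + y \<in> \<Union>C" using ch[of J1 J2] CA ideal_add unfolding A_def by blast
      next
        fix r x assume "x \<in> \<Union>C"
        then obtain J1 where "x \<in> J1" "J1 \<in> C" by auto
        then show "r * x \<in> \<Union>C" using CA ideal_multl unfolding A_def by blast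
      qed
      moreover have "I \<subseteq> \<Union>C" using J0 CA unfolding A_def by auto
      moreover have "1 \<notin> \<Union>C" using CA unfolding A_def by auto
      ultimately show ?thesis unfolding A_def by auto
    qed
  qed
  then obtain M where M: "M \<in> A" and mx: "\<And>X. X \<in> A \<Longrightarrow> M \<subseteq> X \<Longrightarrow> X = M" by auto
  have "max_ideal M" unfolding max_ideal_def
  proof (intro conjI allI impI)
    show "r_ideal M" using M A_def by auto
    show "M \<noteq> UNIV" using M A_def by auto
    fix J assume J: "r_ideal J \<and> M \<subseteq> J"
    show "J = M \<or> J = UNIV"
    proof (cases "1 \<in> J")
      case True then show ?thesis using ideal_one J by auto
    next
      case False then have "J \<in> A" using J M unfolding A_def by auto
      then show ?thesis using mx J by auto
    qed
  qed
  then show ?thesis using M A_def by auto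
qed

lemma max_avoid:
  assumes "max_ideal m" "max_ideal m'" "m \<noteq> m'"
  shows "\<exists>e. e \<in> m' \<and> e \<notin> m"
proof (rule ccontr)
  assume "\<not> ?thesis"
  then have "m' \<subseteq> m" by auto
  then show False using assms unfolding max_ideal_def by auto
qed

lemma crt_elem:
  fixes T :: "'r::comm_ring_1 set set"
  assumes fin: "finite T" and TM: "\<And>m. m \<in> T \<Longrightarrow> max_ideal m" and m: "m \<in> T"
  shows "\<exists>c. c \<notin> m \<and> (\<forall>m'\<in>T. m' \<noteq> m \<longrightarrow> c \<in> m')"
proof -
  have "\<forall>m'\<in>T - {m}. \<exists>e. e \<in> m' \<and> e \<notin> m"
    using max_avoid TM m by blast
  then obtain e where e: "\<And>m'. m' \<in> T - {m} \<Longrightarrow> e m' \<in> m' \<and> e m' \<notin> m" by metis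
  define c where "c = prod e (T - {m})"
  have "c \<notin> m" unfolding c_def
    by (rule prime_prod_notin) (use max_prime[OF TM[OF m]] e in auto)
  moreover have "c \<in> m'" if "m' \<in> T" "m' \<noteq> m" for m'
  proof -
    have I: "r_ideal m'" using TM[OF that(1)] by (simp add: max_ideal_def)
    have "c = e m' * prod e (T - {m} - {m'})" unfolding c_def
      using that fin by (subst prod.remove[of _ m']) auto
    then show ?thesis using e[of m'] that ideal_multr[OF I] by auto
  qed
  ultimately show ?thesis by auto
qed

lemma comax:
  fixes D t :: "'r::comm_ring_1"
  assumes "\<And>m. max_ideal m \<Longrightarrow> t \<in> m \<Longrightarrow> D \<notin> m"
  shows "\<exists>a b. a * D + b * t = 1"
proof (rule ccontr)
  assume na: "\<not> ?thesis"
  define J where "J = {a * D + b * t | a b. True}"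
  have JI: "r_ideal J" unfolding r_ideal_def J_def
  proof (intro conjI ballI allI)
    show "0 \<in> {a * D + b * t |a b. True}" by (auto intro!: exI[of _ 0])
    fix u v assume "u \<in> {a * D + b * t |a b. True}" "v \<in> {a * D + b * t |a b. True}"
    then obtain a b a' b' where "u = a * D + b * t" "v = a' * D + b' * t" by auto
    then have "u + v = (a + a') * D + (b + b') * t" by (simp add: algebra_simps)
    then show "u + v \<in> {a * D + b * t |a b. True}" by blast
  next
    fix s u assume "u \<in> {a * D + b * t |a b. True}"
    then obtain a b where "u = a * D + b * t" by auto
    then have "s * u = (s * a) * D + (s * b) * t" by (simp add: algebra_simps)
    then show "s * u \<in> {a * D + b * t |a b. True}" by blast
  qed
  have "1 \<notin> J" using na unfolding J_def by auto
  then obtain m where m: "max_ideal m" "J \<subseteq> m" using max_exists[OF JI] by auto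
  have "t = 0 * D + 1 * t" "D = 1 * D + 0 * t" by simp_all
  then have "t \<in> J" "D \<in> J" unfolding J_def by blast+
  then show False using assms m by auto
qed

lemma alg_simps:
  assumes "is_algebra_map \<phi>"
  shows "\<phi> 1 = 1" "\<phi> (r + s) = \<phi> r + \<phi> s" "\<phi> (r * s) = \<phi> r * \<phi> s" "\<phi> r * a = a * \<phi> r"
  using assms unfolding is_algebra_map_def by blast+

locale amod =
  fixes \<phi> :: "'r::idom \<Rightarrow> 'a::ring_1" and act :: "'m::ab_group_add \<Rightarrow> 'a \<Rightarrow> 'm"
  assumes alg: "is_algebra_map \<phi>" and rm: "right_module act"
begin

lemma phi_1[simp]: "\<phi> 1 = 1" and phi_add: "\<phi> (r + s) = \<phi> r + \<phi> s"
  and phi_mult: "\<phi> (r * s) = \<phi> r * \<phi> s" and phi_central: "\<phi> r * a = a * \<phi> r"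
  by (rule alg_simps[OF alg])+

lemma act_1[simp]: "act x 1 = x" and act_mult: "act x (a * b) = act (act x a) b"
  and act_addl: "act (x + y) a = act x a + act y a" and act_addr: "act x (a + b) = act x a + act x b"
  using rm by (auto simp: right_module_def)

lemma act_0r[simp]: "act x 0 = 0"
  using act_addr[of x 0 0] by simp
lemma act_0l[simp]: "act 0 a = 0"
  using act_addl[of 0 0 a] by simp
lemma act_negl: "act (- x) a = - act x a"
  using act_addl[of x "-x" a] by (metis minus_unique right_minus act_0l)
lemma act_diffl: "act (x - y) a = act x a - act y a"
  using act_addl[of x "-y" a] act_negl by simp
lemma act_suml: "act (\<Sum>i\<in>I. f i) a = (\<Sum>i\<in>I. act (f i) a)"
  by (induction I rule: infinite_finite_induct) (auto simp: act_addl)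

sublocale rmod "\<lambda>x r. act x (\<phi> r)"
  by unfold_locales (auto simp: act_mult[symmetric] phi_mult[symmetric] phi_add act_addl act_addr)

lemma act_sm_comm: "act (act x (\<phi> r)) a = act (act x a) (\<phi> r)"
  by (metis act_mult phi_central)

end

lemma sum_closed: "P 0 \<Longrightarrow> (\<And>x y. P x \<Longrightarrow> P y \<Longrightarrow> P (x + y)) \<Longrightarrow> (\<And>i. i \<in> I \<Longrightarrow> P (h i)) \<Longrightarrow> P (sum h I)"
  by (induction I rule: infinite_finite_induct) auto

locale tfmod = amod \<phi> act for \<phi> :: "'r::idom \<Rightarrow> 'a::ring_1" and act :: "'m::ab_group_add \<Rightarrow> 'a \<Rightarrow> 'm" +
  fixes S :: "'r set"
  assumes tf: "\<And>x r. r \<noteq> 0 \<Longrightarrow> act x (\<phi> r) = 0 \<Longrightarrow> x = 0"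
    and S1: "1 \<in> S" and S0: "0 \<notin> S" and Smult: "\<And>s t. s \<in> S \<Longrightarrow> t \<in> S \<Longrightarrow> s * t \<in> S"
begin

abbreviation "cls x s \<equiv> loc_class (\<lambda>x r. act x (\<phi> r)) S x s"
abbreviation "clsL a t \<equiv> loc_class (\<lambda>a r. a * \<phi> r) S a t"
abbreviation "LM \<equiv> loc (\<lambda>x r. act x (\<phi> r)) S"
abbreviation "LL \<equiv> loc (\<lambda>a r. a * \<phi> r) S"
abbreviation "ladd \<equiv> loc_add (\<lambda>x r. act x (\<phi> r)) S"
abbreviation "lact \<equiv> loc_act (\<lambda>x r. act x (\<phi> r)) S act"

lemma S_nz: "s \<in> S \<Longrightarrow> s \<noteq> 0" using S0 by auto

lemma Sprod: "finite I \<Longrightarrow> (\<And>i. i \<in> I \<Longrightarrow> f i \<in> S) \<Longrightarrow> prod f I \<in> S"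
  by (induction I rule: finite_induct) (auto simp: S1 Smult)

lemma cancel: "s \<noteq> 0 \<Longrightarrow> act x (\<phi> s) = act y (\<phi> s) \<Longrightarrow> x = y"
  using tf[of s "x - y"] by (simp add: act_diffl)

lemma rel_iff: "((x,s),(y,t)) \<in> loc_rel (\<lambda>x r. act x (\<phi> r)) S \<longleftrightarrow> s \<in> S \<and> t \<in> S \<and> act x (\<phi> t) = act y (\<phi> s)"
proof -
  have "(\<exists>u\<in>S. act (act x (\<phi> t) - act y (\<phi> s)) (\<phi> u) = 0) \<longleftrightarrow> act x (\<phi> t) = act y (\<phi> s)"
  proof
    assume "\<exists>u\<in>S. act (act x (\<phi> t) - act y (\<phi> s)) (\<phi> u) = 0"
    then obtain u where "u \<in> S" "act (act x (\<phi> t) - act y (\<phi> s)) (\<phi> u) = 0" by auto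
    then have "act x (\<phi> t) - act y (\<phi> s) = 0" using tf S_nz by blast
    then show "act x (\<phi> t) = act y (\<phi> s)" by simp
  next
    assume "act x (\<phi> t) = act y (\<phi> s)"
    then show "\<exists>u\<in>S. act (act x (\<phi> t) - act y (\<phi> s)) (\<phi> u) = 0" using S1 by (auto intro!: bexI[of _ 1])
  qed
  then show ?thesis unfolding loc_rel_def by auto
qed

lemma mem_cls: "(y,t) \<in> cls x s \<longleftrightarrow> s \<in> S \<and> t \<in> S \<and> act x (\<phi> t) = act y (\<phi> s)"
  unfolding loc_class_def using rel_iff by auto

lemma cls_trans_aux:
  assumes s: "s \<in> S" and H: "act x (\<phi> t) = act y (\<phi> s)" and H2: "act x (\<phi> v) = act z (\<phi> s)"
  shows "act y (\<phi> v) = act z (\<phi> t)"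
proof -
  have "act (act y (\<phi> v)) (\<phi> s) = act (act y (\<phi> s)) (\<phi> v)" by (simp add: mult.commute)
  also have "\<dots> = act (act x (\<phi> t)) (\<phi> v)" by (simp add: H)
  also have "\<dots> = act (act x (\<phi> v)) (\<phi> t)" by (simp add: mult.commute)
  also have "\<dots> = act (act z (\<phi> s)) (\<phi> t)" by (simp add: H2)
  also have "\<dots> = act (act z (\<phi> t)) (\<phi> s)" by (simp add: mult.commute)
  finally show ?thesis using cancel S_nz[OF s] by blast
qed

lemma cls_eq: assumes st: "s \<in> S" "t \<in> S"
  shows "cls x s = cls y t \<longleftrightarrow> act x (\<phi> t) = act y (\<phi> s)"
proof
  assume e: "cls x s = cls y t"
  have "(y,t) \<in> cls y t" using st by (simp add: mem_cls)
  then have "(y,t) \<in> cls x s" using e by (simp only:)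
  then show "act x (\<phi> t) = act y (\<phi> s)" unfolding mem_cls by blast
next
  assume H: "act x (\<phi> t) = act y (\<phi> s)"
  show "cls x s = cls y t"
  proof (rule Set.set_eqI)
    fix p :: "'m \<times> 'r"
    obtain z v where p: "p = (z, v)" by (cases p)
    show "p \<in> cls x s \<longleftrightarrow> p \<in> cls y t"
      unfolding p mem_cls
      using cls_trans_aux[OF st(1) H, of v z] cls_trans_aux[OF st(2) H[symmetric], of v z] st
      by blast
  qed
qed

lemma in_loc: "s \<in> S \<Longrightarrow> cls x s \<in> LM"
  unfolding loc_def loc_class_def by (rule quotientI) auto

lemma loc_cases: "X \<in> LM \<Longrightarrow> \<exists>x s. s \<in> S \<and> X = cls x s"
  unfolding loc_def loc_class_def by (erule quotientE) auto

lemma inL: "t \<in> S \<Longrightarrow> clsL a t \<in> LL"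
  unfolding loc_def loc_class_def by (rule quotientI) auto

lemma L_cases: "A \<in> LL \<Longrightarrow> \<exists>a t. t \<in> S \<and> A = clsL a t"
  unfolding loc_def loc_class_def by (erule quotientE) auto

lemma some_cls: assumes s: "s \<in> S"
  shows "\<exists>x' s'. (SOME p. p \<in> cls x s) = (x', s') \<and> s' \<in> S \<and> act x (\<phi> s') = act x' (\<phi> s)"
proof -
  have "(x, s) \<in> cls x s" using s by (simp add: mem_cls)
  then have "(SOME p. p \<in> cls x s) \<in> cls x s" by (rule someI)
  then show ?thesis by (cases "SOME p. p \<in> cls x s") (auto simp: mem_cls)
qed

lemma some_clsL: assumes t: "t \<in> S"
  shows "\<exists>a' t'. (SOME p. p \<in> clsL a t) = (a', t') \<and> t' \<in> S \<and> (\<exists>u\<in>S. a * \<phi> t' * \<phi> u = a' * \<phi> t * \<phi> u)"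
proof -
  have "(a * \<phi> t - a * \<phi> t) * \<phi> 1 = 0" by simp
  then have "\<exists>u\<in>S. (a * \<phi> t - a * \<phi> t) * \<phi> u = 0" using S1 by blast
  then have "(a, t) \<in> clsL a t" using t unfolding loc_class_def loc_rel_def by simp
  then have "(SOME p. p \<in> clsL a t) \<in> clsL a t" by (rule someI)
  moreover obtain a' t' where e: "(SOME p. p \<in> clsL a t) = (a', t')" by (cases "SOME p. p \<in> clsL a t")
  ultimately have "(a', t') \<in> clsL a t" by simp
  then have "t' \<in> S" "\<exists>u\<in>S. (a * \<phi> t' - a' * \<phi> t) * \<phi> u = 0"
    unfolding loc_class_def loc_rel_def by simp_all
  then show ?thesis using e by (simp add: left_diff_distrib)
qed

lemma add_cls: assumes s: "s \<in> S" and t: "t \<in> S"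
  shows "ladd (cls x s) (cls y t) = cls (act x (\<phi> t) + act y (\<phi> s)) (s * t)"
proof -
  obtain x' s' where 1: "(SOME p. p \<in> cls x s) = (x', s')" "s' \<in> S" "act x (\<phi> s') = act x' (\<phi> s)"
    using some_cls[OF s, of x] by (elim exE conjE) (rule that)
  obtain y' t' where 2: "(SOME p. p \<in> cls y t) = (y', t')" "t' \<in> S" "act y (\<phi> t') = act y' (\<phi> t)"
    using some_cls[OF t, of y] by (elim exE conjE) (rule that)
  have e1: "act x' (\<phi> (t' * s * t)) = act x (\<phi> (t * s' * t'))"
  proof -
    have "act x' (\<phi> (t' * s * t)) = act (act x' (\<phi> s)) (\<phi> (t' * t))" by (simp add: ac_simps)
    also have "\<dots> = act (act x (\<phi> s')) (\<phi> (t' * t))" by (simp add: 1)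
    finally show ?thesis by (simp add: ac_simps)
  qed
  have e2: "act y' (\<phi> (s' * s * t)) = act y (\<phi> (s * s' * t'))"
  proof -
    have "act y' (\<phi> (s' * s * t)) = act (act y' (\<phi> t)) (\<phi> (s' * s))" by (simp add: ac_simps)
    also have "\<dots> = act (act y (\<phi> t')) (\<phi> (s' * s))" by (simp add: 2)
    finally show ?thesis by (simp add: ac_simps)
  qed
  have "ladd (cls x s) (cls y t) = cls (act x' (\<phi> t') + act y' (\<phi> s')) (s' * t')"
    unfolding loc_add_def using 1 2 by simp
  also have "\<dots> = cls (act x (\<phi> t) + act y (\<phi> s)) (s * t)"
    using e1 e2 by (subst cls_eq) (auto simp: Smult s t 1 2 sm_addl ac_simps)
  finally show ?thesis .
qed

lemma act_cls: assumes s: "s \<in> S" and t: "t \<in> S"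
  shows "lact (cls x s) (clsL a t) = cls (act x a) (s * t)"
proof -
  obtain x' s' where 1: "(SOME p. p \<in> cls x s) = (x', s')" "s' \<in> S" "act x (\<phi> s') = act x' (\<phi> s)"
    using some_cls[OF s, of x] by (elim exE conjE) (rule that)
  obtain a' t' u where 2: "(SOME p. p \<in> clsL a t) = (a', t')" "t' \<in> S" "u \<in> S"
     "a * \<phi> t' * \<phi> u = a' * \<phi> t * \<phi> u"
    using some_clsL[OF t, of a] by (elim exE conjE bexE) (rule that)
  have key: "act (act x a) (\<phi> (s' * t' * u)) = act (act x' a') (\<phi> (s * t * u))"
  proof -
    have "act (act x a) (\<phi> (s' * t' * u)) = act x (a * (\<phi> s' * (\<phi> t' * \<phi> u)))"
      by (simp only: act_mult phi_mult)
    also have "\<dots> = act x (\<phi> s' * (a * \<phi> t' * \<phi> u))"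
      by (metis mult.assoc phi_central)
    also have "\<dots> = act (act x' (\<phi> s)) (a' * \<phi> t * \<phi> u)"
      unfolding 2(4) by (simp only: act_mult 1(3))
    also have "\<dots> = act x' (\<phi> s * (a' * \<phi> t * \<phi> u))"
      by (simp only: act_mult)
    also have "\<dots> = act x' (a' * (\<phi> s * (\<phi> t * \<phi> u)))"
      by (metis mult.assoc phi_central)
    also have "\<dots> = act (act x' a') (\<phi> (s * t * u))"
      by (simp only: act_mult phi_mult)
    finally show ?thesis .
  qed
  have "lact (cls x s) (clsL a t) = cls (act x' a') (s' * t')"
    unfolding loc_act_def using 1 2 by simp
  also have "\<dots> = cls (act x a) (s * t)"
  proof (subst cls_eq)
    show "s' * t' \<in> S" "s * t \<in> S" using 1 2 s t Smult by auto
    have "act (act (act x' a') (\<phi> (s * t))) (\<phi> u) = act (act (act x a) (\<phi> (s' * t'))) (\<phi> u)"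
      using key by simp
    then show "act (act x' a') (\<phi> (s * t)) = act (act x a) (\<phi> (s' * t'))"
      using cancel S_nz[OF 2(3)] by blast
  qed
  finally show ?thesis .
qed

end

context tfmod begin

lemma add_in: "X \<in> LM \<Longrightarrow> Y \<in> LM \<Longrightarrow> ladd X Y \<in> LM"
  using loc_cases[of X] loc_cases[of Y] by (auto simp: add_cls in_loc Smult)

lemma act_in: "X \<in> LM \<Longrightarrow> A \<in> LL \<Longrightarrow> lact X A \<in> LM"
  using loc_cases[of X] L_cases[of A] by (auto simp: act_cls in_loc Smult)

lemma add_comm: "X \<in> LM \<Longrightarrow> Y \<in> LM \<Longrightarrow> ladd X Y = ladd Y X"
  using loc_cases[of X] loc_cases[of Y] by (auto simp: add_cls add.commute mult.commute)

lemma interchange: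
  assumes "P \<in> LM" "Q \<in> LM" "U \<in> LM" "V \<in> LM"
  shows "ladd (ladd P U) (ladd Q V) = ladd (ladd P Q) (ladd U V)"
proof -
  obtain p sp where p: "sp \<in> S" "P = cls p sp" using loc_cases assms(1) by blast
  obtain q sq where q: "sq \<in> S" "Q = cls q sq" using loc_cases assms(2) by blast
  obtain u su where u: "su \<in> S" "U = cls u su" using loc_cases assms(3) by blast
  obtain v sv where v: "sv \<in> S" "V = cls v sv" using loc_cases assms(4) by blast
  show ?thesis unfolding p q u v
    using p(1) q(1) u(1) v(1) by (simp add: add_cls Smult sm_addl ac_simps)
qed

lemma zero_right: assumes s: "s \<in> S" and X: "X \<in> LM" shows "ladd X (cls 0 s) = X"
proof -
  obtain x t where t: "t \<in> S" "X = cls x t" using loc_cases X by blast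
  have "ladd X (cls 0 s) = cls (act x (\<phi> s)) (t * s)" using t s by (simp add: add_cls)
  also have "\<dots> = cls x t" using t s by (subst cls_eq) (simp_all add: Smult mult.commute)
  finally show ?thesis using t by simp
qed

lemma idem_zero:
  assumes s: "s \<in> S" and X: "X \<in> LM" and e: "ladd X X = X"
  shows "X = cls 0 s"
proof -
  obtain x t where t: "t \<in> S" "X = cls x t" using loc_cases X by blast
  have "cls (act x (\<phi> t) + act x (\<phi> t)) (t * t) = cls x t" using e t by (simp add: add_cls)
  then have "act (act x (\<phi> t) + act x (\<phi> t)) (\<phi> t) = act x (\<phi> (t * t))"
    using t by (simp add: cls_eq Smult)
  then have "act x (\<phi> (t * t)) = 0" by (simp add: sm_addl)
  then have "x = 0" using tf[of "t * t" x] S_nz[OF t(1)] by simp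
  then show ?thesis using t s by (simp add: cls_eq)
qed

lemma act_distrib:
  assumes X: "X \<in> LM" and Y: "Y \<in> LM" and A: "A \<in> LL"
  shows "lact (ladd X Y) A = ladd (lact X A) (lact Y A)"
proof -
  obtain x s where xs: "s \<in> S" "X = cls x s" using loc_cases X by blast
  obtain y t where yt: "t \<in> S" "Y = cls y t" using loc_cases Y by blast
  obtain a v where av: "v \<in> S" "A = clsL a v" using L_cases A by blast
  have d: "act (act x (\<phi> t) + act y (\<phi> s)) a = act (act x a) (\<phi> t) + act (act y a) (\<phi> s)"
    by (simp only: act_addl act_sm_comm)
  show ?thesis unfolding xs yt av using xs(1) yt(1) av(1)
    by (simp add: add_cls act_cls Smult cls_eq d sm_addl ac_simps)
qed

lemma cls_inj: "s \<in> S \<Longrightarrow> cls x s = cls y s \<Longrightarrow> x = y"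
  using cancel S_nz by (simp add: cls_eq) blast

lemma cls_add_same: "s \<in> S \<Longrightarrow> ladd (cls x s) (cls y s) = cls (x + y) s"
  by (simp add: add_cls cls_eq Smult sm_addl ac_simps)

lemma cls1_add: "ladd (cls x 1) (cls y 1) = cls (x + y) 1"
  using cls_add_same[OF S1] .

lemma cls1_act: "lact (cls x 1) (clsL a 1) = cls (act x a) 1"
  using act_cls[OF S1 S1] by simp

end

lemma lift_map:
  fixes \<phi> :: "'r::idom \<Rightarrow> 'a::ring_1" and actM :: "'m::ab_group_add \<Rightarrow> 'a \<Rightarrow> 'm"
    and actN :: "'n::ab_group_add \<Rightarrow> 'a \<Rightarrow> 'n"
  assumes M: "tfmod \<phi> actM S" and N: "tfmod \<phi> actN S" and fgM: "fg_right_module actM"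
    and fin: "\<And>X. X \<in> loc (\<lambda>x r. actM x (\<phi> r)) S \<Longrightarrow> f X \<in> loc (\<lambda>x r. actN x (\<phi> r)) S"
    and fadd: "\<And>X Y. X \<in> loc (\<lambda>x r. actM x (\<phi> r)) S \<Longrightarrow> Y \<in> loc (\<lambda>x r. actM x (\<phi> r)) S \<Longrightarrow>
       f (loc_add (\<lambda>x r. actM x (\<phi> r)) S X Y) = loc_add (\<lambda>x r. actN x (\<phi> r)) S (f X) (f Y)"
    and fact: "\<And>X A. X \<in> loc (\<lambda>x r. actM x (\<phi> r)) S \<Longrightarrow> A \<in> loc (\<lambda>a r. a * \<phi> r) S \<Longrightarrow>
       f (loc_act (\<lambda>x r. actM x (\<phi> r)) S actM X A) = loc_act (\<lambda>x r. actN x (\<phi> r)) S actN (f X) A"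
  shows "\<exists>\<gamma> \<sigma>. \<sigma> \<in> S \<and>
    (\<forall>x. f (loc_class (\<lambda>x r. actM x (\<phi> r)) S x 1) = loc_class (\<lambda>x r. actN x (\<phi> r)) S (\<gamma> x) \<sigma>) \<and>
    (\<forall>x x'. \<gamma> (x + x') = \<gamma> x + \<gamma> x') \<and> (\<forall>x a. \<gamma> (actM x a) = actN (\<gamma> x) a)"
proof -
  interpret M: tfmod \<phi> actM S by (rule M)
  interpret N: tfmod \<phi> actN S by (rule N)
  define F where "F x = f (M.cls x 1)" for x
  have Fin: "F x \<in> N.LM" for x unfolding F_def by (rule fin[OF M.in_loc[OF M.S1]])
  have Fadd: "F (x + x') = N.ladd (F x) (F x')" for x x'
    unfolding F_def M.cls1_add[symmetric] by (rule fadd[OF M.in_loc[OF M.S1] M.in_loc[OF M.S1]])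
  have Fact: "F (actM x a) = N.lact (F x) (N.clsL a 1)" for x a
    unfolding F_def M.cls1_act[symmetric] by (rule fact[OF M.in_loc[OF M.S1] M.inL[OF M.S1]])
  obtain G where G: "finite G" "\<And>x. \<exists>c. x = (\<Sum>g\<in>G. actM g (c g))"
    using fgM unfolding fg_right_module_def by blast
  have "\<forall>g. \<exists>y s. s \<in> S \<and> F g = N.cls y s" using N.loc_cases Fin by blast
  then obtain yg sg where ys: "\<And>g. sg g \<in> S" "\<And>g. F g = N.cls (yg g) (sg g)" by metis
  define \<sigma> where "\<sigma> = prod sg G"
  have \<sigma>: "\<sigma> \<in> S" unfolding \<sigma>_def using G(1) ys(1) by (simp add: N.Sprod)
  define P where "P x \<longleftrightarrow> (\<exists>y. F x = N.cls y \<sigma>)" for x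
  have P0: "P 0"
  proof -
    have "N.ladd (F 0) (F 0) = F 0" using Fadd[of 0 0] by simp
    then have "F 0 = N.cls 0 \<sigma>" using N.idem_zero[OF \<sigma> Fin] by blast
    then show ?thesis unfolding P_def by blast
  qed
  have Padd: "P (x + x')" if Px: "P x" "P x'" for x x'
  proof -
    obtain y y' where "F x = N.cls y \<sigma>" "F x' = N.cls y' \<sigma>" using Px unfolding P_def by blast
    then have "F (x + x') = N.cls (y + y') \<sigma>" by (simp add: Fadd N.cls_add_same[OF \<sigma>])
    then show ?thesis unfolding P_def by blast
  qed
  have Pgen: "P (actM g a)" if g: "g \<in> G" for g a
  proof -
    define \<rho> where "\<rho> = prod sg (G - {g})"
    have sr: "\<sigma> = sg g * \<rho>" unfolding \<sigma>_def \<rho>_def using G(1) g by (simp add: prod.remove)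
    have "F (actM g a) = N.lact (F g) (N.clsL a 1)" by (rule Fact)
    also have "\<dots> = N.lact (N.cls (yg g) (sg g)) (N.clsL a 1)" by (simp only: ys(2))
    also have "\<dots> = N.cls (actN (yg g) a) (sg g * 1)" by (rule N.act_cls[OF ys(1) N.S1])
    also have "\<dots> = N.cls (actN (actN (yg g) a) (\<phi> \<rho>)) \<sigma>"
      using ys(1)[of g] \<sigma> by (subst N.cls_eq) (simp_all add: sr ac_simps)
    finally show ?thesis unfolding P_def by blast
  qed
  have Pall: "P x" for x
  proof -
    obtain c where c: "x = (\<Sum>g\<in>G. actM g (c g))" using G(2) by blast
    show ?thesis unfolding c by (rule sum_closed[where P = P]) (auto intro: P0 Padd Pgen)
  qed
  define \<gamma> where "\<gamma> x = (SOME y. F x = N.cls y \<sigma>)" for x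
  have h\<gamma>: "F x = N.cls (\<gamma> x) \<sigma>" for x
    using Pall[of x] unfolding P_def \<gamma>_def by (rule someI_ex)
  have "\<gamma> (x + x') = \<gamma> x + \<gamma> x'" for x x'
  proof -
    have "N.cls (\<gamma> (x + x')) \<sigma> = N.cls (\<gamma> x + \<gamma> x') \<sigma>"
      by (metis Fadd h\<gamma> N.cls_add_same[OF \<sigma>])
    then show ?thesis by (rule N.cls_inj[OF \<sigma>])
  qed
  moreover have "\<gamma> (actM x a) = actN (\<gamma> x) a" for x a
  proof -
    have "N.cls (\<gamma> (actM x a)) \<sigma> = N.cls (actN (\<gamma> x) a) \<sigma>"
      using Fact[of x a] h\<gamma>[of x] h\<gamma>[of "actM x a"] N.act_cls[OF \<sigma> N.S1] by simp
    then show ?thesis by (rule N.cls_inj[OF \<sigma>])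
  qed
  ultimately show ?thesis using \<sigma> h\<gamma> unfolding F_def by blast
qed

lemma extract_maps:
  fixes \<phi> :: "'r::idom \<Rightarrow> 'a::ring_1" and actM :: "'m::ab_group_add \<Rightarrow> 'a \<Rightarrow> 'm"
    and actN :: "'n::ab_group_add \<Rightarrow> 'a \<Rightarrow> 'n"
  assumes M: "tfmod \<phi> actM S" and N: "tfmod \<phi> actN S"
    and fgM: "fg_right_module actM" and fgN: "fg_right_module actN"
    and ds: "loc_direct_summand \<phi> S actM actN"
  shows "\<exists>\<gamma> \<delta> u. u \<in> S \<and> (\<forall>x x'. \<gamma> (x + x') = \<gamma> x + \<gamma> x') \<and> (\<forall>x a. \<gamma> (actM x a) = actN (\<gamma> x) a)
     \<and> (\<forall>y y'. \<delta> (y + y') = \<delta> y + \<delta> y') \<and> (\<forall>y a. \<delta> (actN y a) = actM (\<delta> y) a)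
     \<and> (\<forall>x. \<delta> (\<gamma> x) = actM x (\<phi> u))"
proof -
  interpret M: tfmod \<phi> actM S by (rule M)
  interpret N: tfmod \<phi> actN S by (rule N)
  from ds have "\<exists>f C. (\<forall>x\<in>M.LM. f x \<in> N.LM) \<and> inj_on f M.LM \<and>
       (\<forall>x\<in>M.LM. \<forall>y\<in>M.LM. f (M.ladd x y) = N.ladd (f x) (f y)) \<and>
       (\<forall>x\<in>M.LM. \<forall>a\<in>M.LL. f (M.lact x a) = N.lact (f x) a) \<and>
       C \<subseteq> N.LM \<and> C \<noteq> {} \<and>
       (\<forall>x\<in>C. \<forall>y\<in>C. N.ladd x y \<in> C) \<and> (\<forall>x\<in>C. \<forall>a\<in>M.LL. N.lact x a \<in> C) \<and>
       (\<forall>n\<in>N.LM. \<exists>!p. fst p \<in> f ` M.LM \<and> snd p \<in> C \<and> n = N.ladd (fst p) (snd p))"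
    unfolding loc_direct_summand_def Let_def is_direct_summand_def .
  then obtain f C where f1: "\<forall>x\<in>M.LM. f x \<in> N.LM" and finj: "inj_on f M.LM"
    and fadd: "\<forall>x\<in>M.LM. \<forall>y\<in>M.LM. f (M.ladd x y) = N.ladd (f x) (f y)"
    and fact: "\<forall>x\<in>M.LM. \<forall>a\<in>M.LL. f (M.lact x a) = N.lact (f x) a"
    and CN: "C \<subseteq> N.LM" and Cne: "C \<noteq> {}"
    and cadd: "\<forall>x\<in>C. \<forall>y\<in>C. N.ladd x y \<in> C" and cact: "\<forall>x\<in>C. \<forall>a\<in>M.LL. N.lact x a \<in> C"
    and dec: "\<forall>n\<in>N.LM. \<exists>!p. fst p \<in> f ` M.LM \<and> snd p \<in> C \<and> n = N.ladd (fst p) (snd p)"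
    by (elim exE conjE) (rule that)
  obtain c0 where c0: "c0 \<in> C" using Cne by blast
  obtain z s0 where zs: "s0 \<in> S" "c0 = N.cls z s0" using N.loc_cases c0 CN by blast
  have zC: "N.cls 0 s0 \<in> C"
  proof -
    have "N.lact c0 (N.clsL 0 1) \<in> C" using cact c0 M.inL[OF M.S1] by blast
    then show ?thesis using zs by (simp add: N.act_cls N.S1)
  qed
  define \<pi> where "\<pi> Y = (SOME X. X \<in> M.LM \<and> (\<exists>c\<in>C. Y = N.ladd (f X) c))" for Y
  have pi_eq: "\<pi> (N.ladd (f X) c) = X" if X: "X \<in> M.LM" and c: "c \<in> C" for X c
  proof -
    let ?Y = "N.ladd (f X) c"
    have fX: "f X \<in> N.LM" using f1 X by (rule bspec)
    have cN: "c \<in> N.LM" using CN c by (rule subsetD)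
    have Y: "?Y \<in> N.LM" by (rule N.add_in[OF fX cN])
    have "\<exists>X'. X' \<in> M.LM \<and> (\<exists>c\<in>C. ?Y = N.ladd (f X') c)"
      by (intro exI[of _ X] conjI bexI[of _ c] X c refl)
    then have h: "\<pi> ?Y \<in> M.LM \<and> (\<exists>c\<in>C. ?Y = N.ladd (f (\<pi> ?Y)) c)"
      unfolding \<pi>_def by (rule someI_ex)
    then obtain c' where c': "c' \<in> C" "?Y = N.ladd (f (\<pi> ?Y)) c'" by (elim conjE bexE) (rule that)
    let ?Q = "\<lambda>p. fst p \<in> f ` M.LM \<and> snd p \<in> C \<and> ?Y = N.ladd (fst p) (snd p)"
    have ex1: "\<exists>!p. ?Q p" using dec Y by (rule bspec)
    have q1: "?Q (f X, c)" using X c by simp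
    have q2: "?Q (f (\<pi> ?Y), c')" using h c' by simp
    from ex1 obtain p0 where u: "\<forall>q. ?Q q \<longrightarrow> q = p0" by (elim ex1E) (rule that)
    have "(f X, c) = (f (\<pi> ?Y), c')" using u[rule_format, OF q1] u[rule_format, OF q2] by (rule trans[OF _ sym])
    then have "f X = f (\<pi> ?Y)" by (rule prod.inject[THEN iffD1, THEN conjunct1])
    then show ?thesis using finj X h unfolding inj_on_def by metis
  qed
  have pi_ex: "\<pi> Y \<in> M.LM \<and> (\<exists>c\<in>C. Y = N.ladd (f (\<pi> Y)) c)" if Y: "Y \<in> N.LM" for Y
  proof -
    have "\<exists>p. fst p \<in> f ` M.LM \<and> snd p \<in> C \<and> Y = N.ladd (fst p) (snd p)"
      using dec Y by (meson ex1_implies_ex)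
    then obtain p where p: "fst p \<in> f ` M.LM" "snd p \<in> C" "Y = N.ladd (fst p) (snd p)"
      by (elim exE conjE) (rule that)
    then obtain X where "X \<in> M.LM" "fst p = f X" by (elim imageE) (rule that, simp_all)
    then have "\<exists>X. X \<in> M.LM \<and> (\<exists>c\<in>C. Y = N.ladd (f X) c)" using p by metis
    then show ?thesis unfolding \<pi>_def by (rule someI_ex)
  qed
  have pi_f: "\<pi> (f X) = X" if X: "X \<in> M.LM" for X
    using pi_eq[OF X zC] N.zero_right[OF zs(1)] f1 X by simp
  have pi_add: "\<pi> (N.ladd Y1 Y2) = M.ladd (\<pi> Y1) (\<pi> Y2)" if Yin: "Y1 \<in> N.LM" "Y2 \<in> N.LM" for Y1 Y2
  proof -
    obtain c1 where c1: "c1 \<in> C" "Y1 = N.ladd (f (\<pi> Y1)) c1" and X1: "\<pi> Y1 \<in> M.LM"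
      using pi_ex[OF Yin(1)] by (elim conjE bexE) (rule that)
    obtain c2 where c2: "c2 \<in> C" "Y2 = N.ladd (f (\<pi> Y2)) c2" and X2: "\<pi> Y2 \<in> M.LM"
      using pi_ex[OF Yin(2)] by (elim conjE bexE) (rule that)
    define X1' where "X1' = \<pi> Y1"
    define X2' where "X2' = \<pi> Y2"
    have e1: "Y1 = N.ladd (f X1') c1" using c1(2) unfolding X1'_def .
    have e2: "Y2 = N.ladd (f X2') c2" using c2(2) unfolding X2'_def .
    have X1': "X1' \<in> M.LM" and X2': "X2' \<in> M.LM" using X1 X2 unfolding X1'_def X2'_def .
    have fX1: "f X1' \<in> N.LM" using f1 X1' by (rule bspec)
    have fX2: "f X2' \<in> N.LM" using f1 X2' by (rule bspec)
    have c1N: "c1 \<in> N.LM" using CN c1(1) by (rule subsetD)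
    have c2N: "c2 \<in> N.LM" using CN c2(1) by (rule subsetD)
    have "N.ladd Y1 Y2 = N.ladd (N.ladd (f X1') c1) (N.ladd (f X2') c2)" by (simp only: e1 e2)
    also have "\<dots> = N.ladd (N.ladd (f X1') (f X2')) (N.ladd c1 c2)"
      by (rule N.interchange[OF fX1 fX2 c1N c2N])
    also have "\<dots> = N.ladd (f (M.ladd X1' X2')) (N.ladd c1 c2)"
      using fadd X1' X2' by simp
    finally have "\<pi> (N.ladd Y1 Y2) = M.ladd X1' X2'"
      using pi_eq[OF M.add_in[OF X1' X2']] cadd c1(1) c2(1) by simp
    then show ?thesis unfolding X1'_def X2'_def .
  qed
  have pi_act: "\<pi> (N.lact Y A) = M.lact (\<pi> Y) A" if Y: "Y \<in> N.LM" and A: "A \<in> M.LL" for Y A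
  proof -
    obtain c where c: "c \<in> C" "Y = N.ladd (f (\<pi> Y)) c" and X: "\<pi> Y \<in> M.LM"
      using pi_ex[OF Y] by (elim conjE bexE) (rule that)
    define X' where "X' = \<pi> Y"
    have e: "Y = N.ladd (f X') c" using c(2) unfolding X'_def .
    have X': "X' \<in> M.LM" using X unfolding X'_def .
    have fX: "f X' \<in> N.LM" using f1 X' by (rule bspec)
    have cN: "c \<in> N.LM" using CN c(1) by (rule subsetD)
    have "N.lact Y A = N.lact (N.ladd (f X') c) A" by (simp only: e)
    also have "\<dots> = N.ladd (N.lact (f X') A) (N.lact c A)"
      by (rule N.act_distrib[OF fX cN A])
    also have "\<dots> = N.ladd (f (M.lact X' A)) (N.lact c A)"
      using fact X' A by simp
    finally have "\<pi> (N.lact Y A) = M.lact X' A"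
      using pi_eq[OF M.act_in[OF X' A]] cact c(1) A by simp
    then show ?thesis unfolding X'_def .
  qed
  obtain \<gamma> \<sigma> where \<sigma>: "\<sigma> \<in> S" and h\<gamma>: "\<And>x. f (M.cls x 1) = N.cls (\<gamma> x) \<sigma>"
    and \<gamma>add: "\<forall>x x'. \<gamma> (x + x') = \<gamma> x + \<gamma> x'" and \<gamma>act: "\<forall>x a. \<gamma> (actM x a) = actN (\<gamma> x) a"
    using lift_map[OF M N fgM, of f] f1 fadd fact by blast
  obtain \<delta> \<sigma>' where \<sigma>': "\<sigma>' \<in> S" and h\<delta>: "\<And>y. \<pi> (N.cls y 1) = M.cls (\<delta> y) \<sigma>'"
    and \<delta>add: "\<forall>y y'. \<delta> (y + y') = \<delta> y + \<delta> y'" and \<delta>act: "\<forall>y a. \<delta> (actN y a) = actM (\<delta> y) a"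
    using lift_map[OF N M fgN, of \<pi>] pi_ex pi_add pi_act by blast
  have comp: "\<delta> (\<gamma> x) = actM x (\<phi> (\<sigma> * \<sigma>'))" for x
  proof -
    have e1: "N.cls (\<gamma> x) 1 = N.lact (N.cls (\<gamma> x) \<sigma>) (N.clsL (\<phi> \<sigma>) 1)"
      using \<sigma> by (simp add: N.act_cls N.S1 N.cls_eq)
    have "M.cls (\<delta> (\<gamma> x)) \<sigma>' = \<pi> (N.cls (\<gamma> x) 1)" by (simp add: h\<delta>)
    also have "\<dots> = \<pi> (N.lact (f (M.cls x 1)) (N.clsL (\<phi> \<sigma>) 1))" by (simp add: e1 h\<gamma>)
    also have "\<dots> = M.lact (\<pi> (f (M.cls x 1))) (N.clsL (\<phi> \<sigma>) 1)"
      using pi_act f1 M.in_loc[OF M.S1] M.inL[OF M.S1] by blast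
    also have "\<dots> = M.lact (M.cls x 1) (N.clsL (\<phi> \<sigma>) 1)"
      using pi_f M.in_loc[OF M.S1] by simp
    also have "\<dots> = M.cls (actM x (\<phi> \<sigma>)) 1" by (simp add: M.act_cls M.S1)
    finally have "M.cls (\<delta> (\<gamma> x)) \<sigma>' = M.cls (actM x (\<phi> \<sigma>)) 1" .
    then show ?thesis using \<sigma>' M.S1 by (simp add: M.cls_eq)
  qed
  show ?thesis
    using \<sigma> \<sigma>' M.Smult \<gamma>add \<gamma>act \<delta>add \<delta>act comp by blast
qed

context amod begin

lemma act_sumr: "act x (\<Sum>i\<in>I. f i) = (\<Sum>i\<in>I. act x (f i))"
  by (induction I rule: infinite_finite_induct) (auto simp: act_addr)

lemma tf_of:
  assumes tfr: "torsion_free (\<lambda>x r. act x (\<phi> r))" and r: "r \<noteq> 0" and xr: "act x (\<phi> r) = 0"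
  shows "x = 0"
proof -
  have xr': "act x (\<phi> (v * r)) = 0" for v
  proof -
    have "act x (\<phi> (v * r)) = act (act x (\<phi> r)) (\<phi> v)" by (simp add: mult.commute)
    then show ?thesis using xr by simp
  qed
  have "loc_class (\<lambda>x r. act x (\<phi> r)) nonzeros x 1 = loc_class (\<lambda>x r. act x (\<phi> r)) nonzeros 0 1"
  proof (rule Set.set_eqI)
    fix p :: "'m \<times> 'r"
    obtain z v where p: "p = (z, v)" by (cases p)
    have "(\<exists>u\<in>nonzeros. act (act x (\<phi> v) - act z (\<phi> 1)) (\<phi> u) = 0) \<longleftrightarrow>
          (\<exists>u\<in>nonzeros. act (act 0 (\<phi> v) - act z (\<phi> 1)) (\<phi> u) = 0)"
    proof
      assume "\<exists>u\<in>nonzeros. act (act x (\<phi> v) - act z (\<phi> 1)) (\<phi> u) = 0"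
      then obtain u where u: "u \<noteq> 0" "act (act x (\<phi> v) - z) (\<phi> u) = 0" by auto
      then have "act x (\<phi> (v * u)) = act z (\<phi> u)" by (simp add: sm_diff_l)
      then have "act (act z (\<phi> u)) (\<phi> r) = 0" using xr'[of "v * u"]
        by (metis sm_assoc mult.commute)
      then have "act (0 - act z (\<phi> 1)) (\<phi> (u * r)) = 0" by (simp add: sm_neg_l)
      moreover have "u * r \<noteq> 0" using u r by simp
      ultimately show "\<exists>u\<in>nonzeros. act (act 0 (\<phi> v) - act z (\<phi> 1)) (\<phi> u) = 0" by auto
    next
      assume "\<exists>u\<in>nonzeros. act (act 0 (\<phi> v) - act z (\<phi> 1)) (\<phi> u) = 0"
      then obtain u where u: "u \<noteq> 0" "act z (\<phi> u) = 0" by (auto simp: sm_neg_l)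
      have "act (act x (\<phi> v) - act z (\<phi> 1)) (\<phi> (u * r)) = act x (\<phi> (v * u * r)) - act (act z (\<phi> u)) (\<phi> r)"
        by (simp add: sm_diff_l ac_simps)
      also have "\<dots> = 0" using xr'[of "v * u"] u by simp
      finally have "act (act x (\<phi> v) - act z (\<phi> 1)) (\<phi> (u * r)) = 0" .
      moreover have "u * r \<noteq> 0" using u r by simp
      ultimately show "\<exists>u\<in>nonzeros. act (act x (\<phi> v) - act z (\<phi> 1)) (\<phi> u) = 0" by auto
    qed
    then show "p \<in> loc_class (\<lambda>x r. act x (\<phi> r)) nonzeros x 1 \<longleftrightarrow>
               p \<in> loc_class (\<lambda>x r. act x (\<phi> r)) nonzeros 0 1"
      unfolding p loc_class_def loc_rel_def by auto
  qed
  then show ?thesis using tfr unfolding torsion_free_def inj_def by blast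
qed

lemma rgen:
  assumes fgM: "fg_right_module act" and fgb: "fg_over_base \<phi>"
  shows "\<exists>xs. \<forall>x. \<exists>c. x = (\<Sum>i<length xs. act (xs!i) (\<phi> (c i)))"
proof -
  obtain G where G: "finite G" "\<And>x. \<exists>c. x = (\<Sum>g\<in>G. act g (c g))"
    using fgM unfolding fg_right_module_def by blast
  obtain H where H: "finite H" "\<And>a. \<exists>c. a = (\<Sum>h\<in>H. \<phi> (c h) * h)"
    using fgb unfolding fg_over_base_def by blast
  obtain d where d: "\<And>a. a = (\<Sum>h\<in>H. \<phi> (d a h) * h)" using H(2) by metis
  obtain ps where ps: "set ps = G \<times> H" "distinct ps"
    using finite_distinct_list[of "G \<times> H"] G(1) H(1) by blast
  define xs where "xs = map (\<lambda>(g, h). act g h) ps"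
  have "\<exists>c. x = (\<Sum>i<length xs. act (xs!i) (\<phi> (c i)))" for x
  proof -
    obtain cg where cg: "x = (\<Sum>g\<in>G. act g (cg g))" using G(2) by blast
    define F where "F p = act (act (fst p) (snd p)) (\<phi> (d (cg (fst p)) (snd p)))" for p
    have "x = (\<Sum>g\<in>G. act g (\<Sum>h\<in>H. \<phi> (d (cg g) h) * h))"
      unfolding cg by (rule sum.cong[OF refl]) (subst d, rule refl)
    also have "\<dots> = (\<Sum>g\<in>G. \<Sum>h\<in>H. F (g, h))"
      unfolding F_def act_sumr by (simp add: phi_central act_mult)
    also have "\<dots> = (\<Sum>p\<in>G \<times> H. F p)"
      by (simp add: sum.cartesian_product)
    also have "\<dots> = sum_list (map F ps)"
      using ps by (simp add: sum_list_distinct_conv_sum_set)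
    also have "\<dots> = (\<Sum>i<length ps. F (ps!i))"
      by (simp add: sum_list_sum_nth atLeast0LessThan)
    also have "\<dots> = (\<Sum>i<length xs. act (xs!i) (\<phi> (d (cg (fst (ps!i))) (snd (ps!i)))))"
      unfolding xs_def F_def by (intro sum.cong) (auto simp: case_prod_beta)
    finally show ?thesis by (rule exI[of _ "\<lambda>i. d (cg (fst (ps!i))) (snd (ps!i))"])
  qed
  then show ?thesis by blast
qed

end

lemma tfmod_intro:
  assumes "amod \<phi> act" "\<And>x r. r \<noteq> 0 \<Longrightarrow> act x (\<phi> r) = 0 \<Longrightarrow> x = 0"
    "1 \<in> S" "0 \<notin> S" "\<And>s t. s \<in> S \<Longrightarrow> t \<in> S \<Longrightarrow> s * t \<in> S"
  shows "tfmod \<phi> act S"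
  using assms unfolding tfmod_def tfmod_axioms_def by blast

definition addv :: "('x::ab_group_add \<Rightarrow> 'y::ab_group_add) \<Rightarrow> bool" where
  "addv f \<longleftrightarrow> (\<forall>x y. f (x + y) = f x + f y)"

lemma addv_add: "addv f \<Longrightarrow> f (x + y) = f x + f y" by (simp add: addv_def)
lemma addv_0: "addv f \<Longrightarrow> f 0 = 0" using addv_add[of f 0 0] by simp
lemma addv_neg: "addv f \<Longrightarrow> f (- x) = - f x"
  using addv_add[of f x "-x"] addv_0[of f] by (metis minus_unique right_minus)
lemma addv_diff: "addv f \<Longrightarrow> f (x - y) = f x - f y"
  using addv_add[of f x "-y"] addv_neg[of f y] by simp
lemma addv_sum: "addv f \<Longrightarrow> f (\<Sum>i\<in>I. g i) = (\<Sum>i\<in>I. f (g i))"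
  by (induction I rule: infinite_finite_induct) (auto simp: addv_add addv_0)

definition pairok where
  "pairok \<phi> actM actN \<gamma> \<delta> u \<longleftrightarrow> addv \<gamma> \<and> (\<forall>x a. \<gamma> (actM x a) = actN (\<gamma> x) a)
     \<and> addv \<delta> \<and> (\<forall>y a. \<delta> (actN y a) = actM (\<delta> y) a) \<and> (\<forall>x. \<delta> (\<gamma> x) = actM x (\<phi> u))"

lemma extract2:
  assumes "tfmod \<phi> actM S" "tfmod \<phi> actN S" "fg_right_module actM" "fg_right_module actN"
    "loc_direct_summand \<phi> S actM actN"
  shows "\<exists>\<gamma> \<delta> u. u \<in> S \<and> pairok \<phi> actM actN \<gamma> \<delta> u"
  using extract_maps[OF assms] unfolding pairok_def addv_def by blast

lemma tfmod_intro2: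
  assumes "amod \<phi> act" "\<forall>x r. r \<noteq> 0 \<longrightarrow> act x (\<phi> r) = 0 \<longrightarrow> x = 0"
    "1 \<in> S" "0 \<notin> S" "\<forall>s\<in>S. \<forall>t\<in>S. s * t \<in> S"
  shows "tfmod \<phi> act S"
  using assms unfolding tfmod_def tfmod_axioms_def by blast

lemma split_summand:
  fixes \<phi> :: "'r::idom \<Rightarrow> 'a::ring_1" and actM :: "'m::ab_group_add \<Rightarrow> 'a \<Rightarrow> 'm" and actN :: "'n::ab_group_add \<Rightarrow> 'a \<Rightarrow> 'n"
    and actK :: "'k::ab_group_add \<Rightarrow> 'a \<Rightarrow> 'k"
  assumes M: "amod \<phi> actM" and N: "amod \<phi> actN" and K: "amod \<phi> actK"
    and g1: "addv g1" and g1a: "\<And>x a. g1 (actM x a) = actN (g1 x) a"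
    and g2: "addv g2" and g2a: "\<And>x a. g2 (actM x a) = actK (g2 x) a"
    and h1: "addv h1" and h1a: "\<And>y a. h1 (actN y a) = actM (h1 y) a"
    and h2: "addv h2" and h2a: "\<And>z a. h2 (actK z a) = actM (h2 z) a"
    and id: "\<And>x. h1 (g1 x) + h2 (g2 x) = x"
  shows "is_direct_summand UNIV (+) actM UNIV
           (\<lambda>(y, z) (y', z'). (y + y', z + z'))
           (\<lambda>(y, z) a. (actN y a, actK z a)) UNIV"
proof -
  interpret M: amod \<phi> actM by (rule M)
  interpret N: amod \<phi> actN by (rule N)
  interpret K: amod \<phi> actK by (rule K)
  define F where "F x = (g1 x, g2 x)" for x
  define P where "P p = h1 (fst p) + h2 (snd p)" for p :: "'n \<times> 'k"
  define C where "C = {p. P p = 0}"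
  have PF: "P (F x) = x" for x by (simp add: P_def F_def id)
  have Padd: "P (y + y', z + z') = P (y, z) + P (y', z')" for y y' z z'
    by (simp add: P_def addv_add[OF h1] addv_add[OF h2])
  have Pdiff: "P (y - y', z - z') = P (y, z) - P (y', z')" for y y' z z'
    by (simp add: P_def addv_diff[OF h1] addv_diff[OF h2])
  have Pact: "P (actN y a, actK z a) = actM (P (y, z)) a" for y z a
    by (simp add: P_def h1a h2a M.act_addl)
  show ?thesis unfolding is_direct_summand_def
  proof (intro exI[of _ F] exI[of _ C] conjI ballI allI)
    show "F x \<in> UNIV" for x by simp
    show "inj_on F UNIV" by (metis PF inj_onI)
    show "F (x + y) = (case F x of (y, z) \<Rightarrow> \<lambda>(y', z'). (y + y', z + z')) (F y)" for x y
      by (simp add: F_def addv_add[OF g1] addv_add[OF g2])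
    show "F (actM x a) = (case F x of (y, z) \<Rightarrow> \<lambda>a. (actN y a, actK z a)) a" for x a
      by (simp add: F_def g1a g2a)
    show "C \<subseteq> UNIV" by simp
    show "C \<noteq> {}"
    proof -
      have "P (0, 0) = 0" by (simp add: P_def addv_0[OF h1] addv_0[OF h2])
      then show ?thesis unfolding C_def by blast
    qed
    show "(case x of (y, z) \<Rightarrow> \<lambda>(y', z'). (y + y', z + z')) y \<in> C" if "x \<in> C" "y \<in> C" for x y
      using that Padd unfolding C_def by (cases x, cases y) auto
    show "(case x of (y, z) \<Rightarrow> \<lambda>a. (actN y a, actK z a)) a \<in> C" if "x \<in> C" for x a
      using that Pact unfolding C_def by (cases x) auto
    fix n :: "'n \<times> 'k"
    obtain n1 n2 where n: "n = (n1, n2)" by (cases n)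
    let ?p = "(F (P n), (n1 - fst (F (P n)), n2 - snd (F (P n))))"
    show "\<exists>!p. fst p \<in> F ` UNIV \<and> snd p \<in> C \<and> n = (case fst p of (y, z) \<Rightarrow> \<lambda>(y', z'). (y + y', z + z')) (snd p)"
    proof (rule ex1I[of _ ?p])
      have "P (n1 - fst (F (P n)), n2 - snd (F (P n))) = 0"
        using Pdiff[of n1 "fst (F (P n))" n2 "snd (F (P n))"] PF[of "P n"] n by simp
      then show "fst ?p \<in> F ` UNIV \<and> snd ?p \<in> C \<and> n = (case fst ?p of (y, z) \<Rightarrow> \<lambda>(y', z'). (y + y', z + z')) (snd ?p)"
        unfolding C_def using n by (simp add: case_prod_beta)
    next
      fix p assume p: "fst p \<in> F ` UNIV \<and> snd p \<in> C \<and> n = (case fst p of (y, z) \<Rightarrow> \<lambda>(y', z'). (y + y', z + z')) (snd p)"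
      then obtain x where x: "fst p = F x" by blast
      obtain c1 c2 where c: "snd p = (c1, c2)" by (cases "snd p")
      have cC: "P (c1, c2) = 0" using p c unfolding C_def by simp
      have nn: "n1 = fst (F x) + c1" "n2 = snd (F x) + c2"
        using p x c n by (auto simp: case_prod_beta)
      have "P n = P (F x) + P (c1, c2)" using Padd[of "fst (F x)" c1 "snd (F x)" c2] n nn by simp
      then have "P n = x" using PF cC by simp
      then show "p = ?p" using x c nn by (simp add: prod_eq_iff)
    qed
  qed
qed

theorem mainTheorem18:
  fixes \<phi> :: "'r::idom \<Rightarrow> 'a::ring_1"
    and actM :: "'m::ab_group_add \<Rightarrow> 'a \<Rightarrow> 'm"
    and actN :: "'n::ab_group_add \<Rightarrow> 'a \<Rightarrow> 'n"
    and actK :: "'k::ab_group_add \<Rightarrow> 'a \<Rightarrow> 'k"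
  assumes "finite_character TYPE('r)"
    and "is_algebra_map \<phi>" and "fg_over_base \<phi>"
    and "right_module actM" and "right_module actN" and "right_module actK"
    and "fg_right_module actM" and "fg_right_module actN" and "fg_right_module actK"
    and "torsion_free (\<lambda>x r. actM x (\<phi> r))"
    and "torsion_free (\<lambda>x r. actN x (\<phi> r))"
    and "torsion_free (\<lambda>x r. actK x (\<phi> r))"
    and "\<And>m. max_ideal m \<Longrightarrow> loc_direct_summand \<phi> (UNIV - m) actM actN"
    and "loc_direct_summand \<phi> nonzeros actM actK"
  shows "is_direct_summand UNIV (+) actM UNIV
           (\<lambda>(y, z) (y', z'). (y + y', z + z'))
           (\<lambda>(y, z) a. (actN y a, actK z a)) UNIV"
proof -
  have aM: "amod \<phi> actM" using assms(2,4) by (simp add: amod_def)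
  have aN: "amod \<phi> actN" using assms(2,5) by (simp add: amod_def)
  have aK: "amod \<phi> actK" using assms(2,6) by (simp add: amod_def)
  interpret M: amod \<phi> actM by (rule aM)
  interpret N: amod \<phi> actN by (rule aN)
  interpret K: amod \<phi> actK by (rule aK)
  have tfM: "\<And>x r. r \<noteq> 0 \<Longrightarrow> actM x (\<phi> r) = 0 \<Longrightarrow> x = 0" by (rule M.tf_of[OF assms(10)])
  have tfN: "\<And>x r. r \<noteq> 0 \<Longrightarrow> actN x (\<phi> r) = 0 \<Longrightarrow> x = 0" by (rule N.tf_of[OF assms(11)])
  have tfK: "\<And>x r. r \<noteq> 0 \<Longrightarrow> actK x (\<phi> r) = 0 \<Longrightarrow> x = 0" by (rule K.tf_of[OF assms(12)])
  have tfM': "\<forall>x r. r \<noteq> 0 \<longrightarrow> actM x (\<phi> r) = 0 \<longrightarrow> x = 0" using tfM by blast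
  have tfN': "\<forall>x r. r \<noteq> 0 \<longrightarrow> actN x (\<phi> r) = 0 \<longrightarrow> x = 0" using tfN by blast
  have tfK': "\<forall>x r. r \<noteq> 0 \<longrightarrow> actK x (\<phi> r) = 0 \<longrightarrow> x = 0" using tfK by blast
  have nzS: "1 \<in> (nonzeros::'r set)" "0 \<notin> (nonzeros::'r set)"
    "\<forall>s\<in>nonzeros. \<forall>t\<in>nonzeros. s * t \<in> (nonzeros::'r set)" by auto
  have mS: "1 \<in> UNIV - m" "0 \<notin> UNIV - m" "\<forall>s\<in>UNIV - m. \<forall>t\<in>UNIV - m. s * t \<in> UNIV - m"
    if mm: "max_ideal m" for m :: "'r set"
  proof -
    have pm: "prime_id m" by (rule max_prime[OF mm])
    then show "1 \<in> UNIV - m" by (simp add: prime_id_def)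
    show "0 \<notin> UNIV - m" using pm by (simp add: prime_id_def ideal_0)
    show "\<forall>s\<in>UNIV - m. \<forall>t\<in>UNIV - m. s * t \<in> UNIV - m"
      using pm unfolding prime_id_def by blast
  qed
  obtain \<alpha> \<beta> t where t: "t \<in> nonzeros" and ab: "pairok \<phi> actM actK \<alpha> \<beta> t"
    using extract2[OF tfmod_intro2[OF aM tfM' nzS] tfmod_intro2[OF aK tfK' nzS] assms(7) assms(9) assms(14)]
    by blast
  have \<alpha>add: "addv \<alpha>" and \<alpha>act: "\<And>x a. \<alpha> (actM x a) = actK (\<alpha> x) a"
    and \<beta>add: "addv \<beta>" and \<beta>act: "\<And>z a. \<beta> (actK z a) = actM (\<beta> z) a"
    and \<beta>\<alpha>: "\<And>x. \<beta> (\<alpha> x) = actM x (\<phi> t)"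
    using ab unfolding pairok_def by auto
  define T where "T = {m. max_ideal m \<and> t \<in> m}"
  have finT: "finite T" using assms(1) t unfolding finite_character_def T_def by auto
  have TM: "\<And>m. m \<in> T \<Longrightarrow> max_ideal m" and tT: "\<And>m. m \<in> T \<Longrightarrow> t \<in> m"
    unfolding T_def by auto
  have "\<forall>m\<in>T. \<exists>g. snd (snd g) \<notin> m \<and> pairok \<phi> actM actN (fst g) (fst (snd g)) (snd (snd g))"
  proof
    fix m assume m: "m \<in> T"
    obtain \<gamma> \<delta> u where "u \<in> UNIV - m" "pairok \<phi> actM actN \<gamma> \<delta> u"
      using extract2[OF tfmod_intro2[OF aM tfM' mS[OF TM[OF m]]] tfmod_intro2[OF aN tfN' mS[OF TM[OF m]]]
          assms(7) assms(8) assms(13)[OF TM[OF m]]] by blast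
    then show "\<exists>g. snd (snd g) \<notin> m \<and> pairok \<phi> actM actN (fst g) (fst (snd g)) (snd (snd g))"
      by (intro exI[of _ "(\<gamma>, \<delta>, u)"]) simp
  qed
  from bchoice[OF this] obtain gf where gf: "\<forall>m\<in>T. snd (snd (gf m)) \<notin> m \<and> pairok \<phi> actM actN (fst (gf m)) (fst (snd (gf m))) (snd (snd (gf m)))"
    by (elim exE) (rule that)
  define \<Gamma> where "\<Gamma> m = fst (gf m)" for m
  define \<Delta> where "\<Delta> m = fst (snd (gf m))" for m
  define U where "U m = snd (snd (gf m))" for m
  have U: "\<And>m. m \<in> T \<Longrightarrow> U m \<notin> m" using gf unfolding U_def by blast
  have pk: "\<And>m. m \<in> T \<Longrightarrow> pairok \<phi> actM actN (\<Gamma> m) (\<Delta> m) (U m)"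
    using gf unfolding U_def \<Gamma>_def \<Delta>_def by blast
  have \<Gamma>add: "\<And>m. m \<in> T \<Longrightarrow> addv (\<Gamma> m)" and \<Gamma>act: "\<And>m x a. m \<in> T \<Longrightarrow> \<Gamma> m (actM x a) = actN (\<Gamma> m x) a"
    and \<Delta>add: "\<And>m. m \<in> T \<Longrightarrow> addv (\<Delta> m)" and \<Delta>act: "\<And>m z a. m \<in> T \<Longrightarrow> \<Delta> m (actN z a) = actM (\<Delta> m z) a"
    and \<Delta>\<Gamma>: "\<And>m x. m \<in> T \<Longrightarrow> \<Delta> m (\<Gamma> m x) = actM x (\<phi> (U m))"
    using pk unfolding pairok_def by auto
  have "\<forall>m\<in>T. \<exists>c. c \<notin> m \<and> (\<forall>m'\<in>T. m' \<noteq> m \<longrightarrow> c \<in> m')"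
    using crt_elem[OF finT TM] by blast
  from bchoice[OF this] obtain cc where cc: "\<forall>m\<in>T. cc m \<notin> m \<and> (\<forall>m'\<in>T. m' \<noteq> m \<longrightarrow> cc m \<in> m')"
    by (elim exE) (rule that)
  define \<gamma> where "\<gamma> x = (\<Sum>m\<in>T. actN (\<Gamma> m x) (\<phi> (cc m)))" for x
  define \<delta> where "\<delta> z = (\<Sum>m\<in>T. actM (\<Delta> m z) (\<phi> (cc m)))" for z
  define y where "y x = \<delta> (\<gamma> x)" for x
  have \<gamma>add: "addv \<gamma>" unfolding addv_def
  proof (intro allI)
    fix x x'
    show "\<gamma> (x + x') = \<gamma> x + \<gamma> x'"
      unfolding \<gamma>_def sum.distrib[symmetric]
      by (rule sum.cong[OF refl]) (simp add: addv_add[OF \<Gamma>add] N.act_addl)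
  qed
  have \<gamma>act: "\<gamma> (actM x a) = actN (\<gamma> x) a" for x a
    unfolding \<gamma>_def N.act_suml by (rule sum.cong[OF refl]) (simp add: \<Gamma>act N.act_sm_comm)
  have \<delta>add: "addv \<delta>" unfolding addv_def
  proof (intro allI)
    fix z z'
    show "\<delta> (z + z') = \<delta> z + \<delta> z'"
      unfolding \<delta>_def sum.distrib[symmetric]
      by (rule sum.cong[OF refl]) (simp add: addv_add[OF \<Delta>add] M.act_addl)
  qed
  have \<delta>act: "\<delta> (actN z a) = actM (\<delta> z) a" for z a
    unfolding \<delta>_def M.act_suml by (rule sum.cong[OF refl]) (simp add: \<Delta>act M.act_sm_comm)
  have yact: "y (actM x a) = actM (y x) a" for x a by (simp add: y_def \<gamma>act \<delta>act)
  have yrl: "M.rlin y" unfolding M.rlin_def y_def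
    by (simp add: addv_add[OF \<gamma>add] addv_add[OF \<delta>add] \<gamma>act \<delta>act)
  obtain xs where xs: "\<And>x. \<exists>c. x = (\<Sum>i<length xs. actM (xs!i) (\<phi> (c i)))"
    using M.rgen[OF assms(7) assms(3)] by blast
  define n where "n = length xs"
  define co where "co z = (SOME c. z = (\<Sum>i<n. actM (xs!i) (\<phi> (c i))))" for z
  have hco: "z = (\<Sum>i<n. actM (xs!i) (\<phi> (co z i)))" for z
    unfolding co_def n_def using xs[of z] by (rule someI_ex)
  define cf where "cf p i j = (if fst p = snd p then (if i = j then U (fst p) else 0)
       else co (\<Delta> (fst p) (\<Gamma> (snd p) (xs!j))) i)" for p :: "'r set \<times> 'r set" and i j
  define rr where "rr p = cc (fst p) * cc (snd p)" for p :: "'r set \<times> 'r set"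
  define B where "B i j = (\<Sum>p\<in>T \<times> T. rr p * cf p i j)" for i j
  have erep: "\<Delta> (fst p) (\<Gamma> (snd p) (xs!j)) = (\<Sum>i<n. actM (xs!i) (\<phi> (cf p i j)))"
    if p: "p \<in> T \<times> T" and j: "j < n" for p j
  proof (cases "fst p = snd p")
    case True
    have "\<Delta> (fst p) (\<Gamma> (snd p) (xs!j)) = actM (xs!j) (\<phi> (U (fst p)))"
      using \<Delta>\<Gamma> p True by (metis SigmaE fst_conv)
    also have "\<dots> = (\<Sum>i<n. if i = j then actM (xs!i) (\<phi> (U (fst p))) else 0)"
      using j by simp
    also have "\<dots> = (\<Sum>i<n. actM (xs!i) (\<phi> (cf p i j)))"
      by (rule sum.cong[OF refl]) (simp add: cf_def True)
    finally show ?thesis .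
  next
    case False
    then show ?thesis using hco[of "\<Delta> (fst p) (\<Gamma> (snd p) (xs!j))"] by (simp add: cf_def)
  qed
  have yexp: "y z = (\<Sum>p\<in>T \<times> T. actM (\<Delta> (fst p) (\<Gamma> (snd p) z)) (\<phi> (rr p)))" for z
  proof -
    have "y z = (\<Sum>m1\<in>T. actM (\<Delta> m1 (\<Sum>m2\<in>T. actN (\<Gamma> m2 z) (\<phi> (cc m2)))) (\<phi> (cc m1)))"
      by (simp add: y_def \<delta>_def \<gamma>_def)
    also have "\<dots> = (\<Sum>m1\<in>T. \<Sum>m2\<in>T. actM (\<Delta> m1 (\<Gamma> m2 z)) (\<phi> (cc m1 * cc m2)))"
    proof (rule sum.cong[OF refl])
      fix m1 assume m1: "m1 \<in> T"
      have "\<Delta> m1 (\<Sum>m2\<in>T. actN (\<Gamma> m2 z) (\<phi> (cc m2))) = (\<Sum>m2\<in>T. actM (\<Delta> m1 (\<Gamma> m2 z)) (\<phi> (cc m2)))"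
        using \<Delta>act[OF m1] by (simp add: addv_sum[OF \<Delta>add[OF m1]])
      then show "actM (\<Delta> m1 (\<Sum>m2\<in>T. actN (\<Gamma> m2 z) (\<phi> (cc m2)))) (\<phi> (cc m1)) =
          (\<Sum>m2\<in>T. actM (\<Delta> m1 (\<Gamma> m2 z)) (\<phi> (cc m1 * cc m2)))"
        by (simp add: M.act_suml mult.commute)
    qed
    also have "\<dots> = (\<Sum>p\<in>T \<times> T. actM (\<Delta> (fst p) (\<Gamma> (snd p) z)) (\<phi> (rr p)))"
      by (simp add: sum.cartesian_product rr_def split_def)
    finally show ?thesis .
  qed
  have rep: "y (xs!j) = (\<Sum>i<length xs. actM (xs!i) (\<phi> (B i j)))" if j: "j < length xs" for j
  proof -
    have "y (xs!j) = (\<Sum>p\<in>T \<times> T. actM (\<Sum>i<n. actM (xs!i) (\<phi> (cf p i j))) (\<phi> (rr p)))"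
      unfolding yexp by (rule sum.cong[OF refl]) (simp add: erep j n_def)
    also have "\<dots> = (\<Sum>p\<in>T \<times> T. \<Sum>i<n. actM (xs!i) (\<phi> (rr p * cf p i j)))"
      by (simp add: M.act_suml mult.commute)
    also have "\<dots> = (\<Sum>i<n. \<Sum>p\<in>T \<times> T. actM (xs!i) (\<phi> (rr p * cf p i j)))"
      by (rule sum.swap)
    also have "\<dots> = (\<Sum>i<length xs. actM (xs!i) (\<phi> (B i j)))"
      by (simp add: B_def M.sm_sum_r n_def)
    finally show ?thesis .
  qed
  have congB: "\<exists>s. s \<notin> m \<and> (\<forall>i<length xs. \<forall>j<length xs. B i j - (if i = j then s else 0) \<in> m)"
    if m: "m \<in> T" for m
  proof (rule exI[of _ "cc m * cc m * U m"], intro conjI allI impI)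
    have pm: "prime_id m" by (rule max_prime[OF TM[OF m]])
    have I: "r_ideal m" using pm by (simp add: prime_id_def)
    have ccm: "cc m \<notin> m" using cc m by blast
    show "cc m * cc m * U m \<notin> m" using pm ccm U[OF m] unfolding prime_id_def by blast
    fix i j assume "i < length xs" "j < length xs"
    have mm: "(m, m) \<in> T \<times> T" using m by simp
    have "B i j = rr (m,m) * cf (m,m) i j + (\<Sum>p\<in>T \<times> T - {(m,m)}. rr p * cf p i j)"
      unfolding B_def by (rule sum.remove[OF finite_cartesian_product[OF finT finT] mm])
    moreover have "rr (m,m) * cf (m,m) i j = (if i = j then cc m * cc m * U m else 0)"
      by (simp add: rr_def cf_def)
    moreover have "(\<Sum>p\<in>T \<times> T - {(m,m)}. rr p * cf p i j) \<in> m"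
    proof (rule ideal_sum[OF I])
      fix p assume p: "p \<in> T \<times> T - {(m,m)}"
      show "rr p * cf p i j \<in> m"
      proof (cases "fst p = m")
        case True
        then have "snd p \<noteq> m" "snd p \<in> T" using p by (auto simp: prod_eq_iff)
        then have "cc (snd p) \<in> m" using cc m by blast
        then show ?thesis unfolding rr_def by (intro ideal_multr[OF I] ideal_multl[OF I])
      next
        case False
        then have "fst p \<in> T" using p by auto
        then have "cc (fst p) \<in> m" using cc m False by blast
        then show ?thesis unfolding rr_def by (intro ideal_multr[OF I])
      qed
    qed
    ultimately show "B i j - (if i = j then cc m * cc m * U m else 0) \<in> m" by simp
  qed
  have Tp: "\<And>m. m \<in> T \<Longrightarrow> prime_id m" using max_prime TM by blast
  obtain a q where a: "\<forall>m\<in>T. a \<notin> m" and aq: "\<forall>x. y (M.ev y q x) = actM x (\<phi> a)"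
    using M.det_trick[of y xs B T, OF yrl xs rep Tp congB] by blast
  have "\<exists>a0 b0. a0 * a + b0 * t = 1"
    by (rule comax) (use a in \<open>auto simp: T_def\<close>)
  then obtain a0 b0 where ab0: "a0 * a + b0 * t = 1" by blast
  define w where "w x = M.ev y q (actM x (\<phi> a0))" for x
  have evrl: "M.rlin (M.ev y q)" by (rule M.rlin_ev[OF yrl])
  have wadd: "addv w" unfolding addv_def w_def
    by (simp add: M.act_addl M.rlin_add[OF evrl])
  have wact: "w (actM x b) = actM (w x) b" for x b
  proof -
    have hr: "M.rlin (\<lambda>z. actM z b)" unfolding M.rlin_def by (simp add: M.act_addl M.act_sm_comm)
    have "w (actM x b) = M.ev y q (actM (actM x (\<phi> a0)) b)" by (simp add: w_def M.act_sm_comm)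
    also have "\<dots> = actM (w x) b"
      unfolding w_def by (rule M.ev_commute[OF hr, symmetric]) (simp add: yact)
    finally show ?thesis .
  qed
  define g1 where "g1 x = \<gamma> (w x)" for x
  define g2 where "g2 x = \<alpha> (actM x (\<phi> b0))" for x
  show ?thesis
  proof (rule split_summand[OF aM aN aK, of g1 g2 \<delta> \<beta>])
    show "addv g1" unfolding addv_def g1_def by (simp add: addv_add[OF wadd] addv_add[OF \<gamma>add])
    show "g1 (actM x b) = actN (g1 x) b" for x b by (simp add: g1_def wact \<gamma>act)
    show "addv g2" unfolding addv_def g2_def by (simp add: M.act_addl addv_add[OF \<alpha>add])
    show "g2 (actM x b) = actK (g2 x) b" for x b
      by (simp add: g2_def \<alpha>act flip: M.act_sm_comm)
    show "addv \<delta>" by (rule \<delta>add)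
    show "\<delta> (actN z b) = actM (\<delta> z) b" for z b by (rule \<delta>act)
    show "addv \<beta>" by (rule \<beta>add)
    show "\<beta> (actK z b) = actM (\<beta> z) b" for z b by (rule \<beta>act)
    show "\<delta> (g1 x) + \<beta> (g2 x) = x" for x
    proof -
      have "\<delta> (g1 x) + \<beta> (g2 x) = y (M.ev y q (actM x (\<phi> a0))) + actM (actM x (\<phi> b0)) (\<phi> t)"
        by (simp add: g1_def g2_def w_def y_def \<beta>\<alpha>)
      also have "\<dots> = actM x (\<phi> (a0 * a)) + actM x (\<phi> (b0 * t))"
        using aq by simp
      also have "\<dots> = actM x (\<phi> (a0 * a + b0 * t))" by (simp add: M.sm_addr)
      also have "\<dots> = x" by (simp add: ab0)
      finally show ?thesis .
    qed
  qed
qed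

end
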